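(* Let $G=(V,E)$, the token alphabet, the training distribution $\mathcal{D}_{\mathrm{train}}$ and the program distribution $P_{\mathrm{prog}}$ be as described in the context. Let $k\ge 1$, let $(\widetilde{\mathtt{inp}}^k,\widetilde{\mathtt{lab}}^k)$ be any input–label pair in the support of $\mathcal{D}_{\mathrm{train}}$, let $d^k$ be the length of $\widetilde{\mathtt{lab}}^k$, let $0\le t\le d^k-1$, and put $z_{1:T}:=\widetilde{\mathtt{inp}}^k+\widetilde{\mathtt{lab}}^k_{1:t}$ (concatenation). Then $P_{\mathrm{prog}}(\cdot\mid z_{1:T})=P_{\mathrm{train}}(\cdot\mid z_{1:T})$, where $P_{\mathrm{train}}(\cdot\mid z_{1:T})$ is the conditional distribution, under $\mathcal{D}_{\mathrm{train}}$, of the next token $\widetilde{\mathtt{lab}}^k_{t+1}$ given the prefix $z_{1:T}$. Consequently $P_{\mathrm{prog}}$ minimizes the few-shot training loss $\widehat{L}_{\mathrm{train}}(P):=-\mathbb{E}_{\mathcal{D}_{\mathrm{train}}}\sum_{k=1}^{K-1}\sum_{t=1}^{d^k-1}\log P\big(\widetilde{\mathtt{lab}}^k_{t+1}\mid \widetilde{\mathtt{inp}}^k+\widetilde{\mathtt{lab}}^k_{1:t}\big)$ over all next-token distributions $P$.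
   Context: Causal structure. Let $\mathcal{V}_{\mathrm{all}}$ be a finite alphabet of vertex symbols and $G=(V,E)$ a directed graph with $V\subseteq\mathcal{V}_{\mathrm{all}}$. Every $v\in\mathcal{V}_{\mathrm{all}}$ has a finite value set $\mathtt{VALS}(v)\subset\mathbb{Z}$ and a finite nonempty set $\mathtt{CONT}(v)$ of context tokens; the sets $\mathtt{CONT}(v)$ are pairwise disjoint and disjoint from vertex and value symbols. Each edge $e=(v_1,v_2)\in E$ ($v_1$ the parent, $v_2$ the child) carries an operation $\mathtt{op}(e)$ of the form $q\mapsto q+c_e$ ($c_e\in\mathbb{Z}$) mapping $\mathtt{VALS}(v_1)$ into $\mathtt{VALS}(v_2)$. Chains are $\mathcal{T}(G)=\{[v_1,\dots,v_n]: (v_i,v_{i+1})\in E\}$; the depth $N$ is the length of the longest chain. Special tokens: $o^{\mathrm{eq}}$ ("="), $o^{\mathrm{cm}}$ (","), $o^{\mathrm{qu}}$ ("?"), $o^{\mathrm{dlm}}$ (newline delimiter). Training sequences. Fix $M<N$ and $M'\ge0$. Take a chain $[u_1,\dots,u_M]\in\mathcal{T}(G)$ and noise vertices $u'_1,\dots,u'_{M'}\in\mathcal{V}_{\mathrm{all}}\setminus V$, and interleave them preserving both relative orders into $[v_1,\dots,v_m]$, $m=M+M'$. Values: the chain vertices get $q(u_1)\sim\mathrm{Uniform}(\mathtt{VALS}(u_1))$ and $q(u_h)=\mathtt{op}(u_{h-1},u_h)(q(u_{h-1}))$; each noise vertex independently gets a uniform value from its $\mathtt{VALS}$. This gives $[v_1,q_1,\dots,v_m,q_m]$.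 Processing. A sequence $[v_1,q_1,\dots,v_L,q_L]$ is turned into $[v_L,o^{\mathrm{eq}},o^{\mathrm{qu}},c(v_1)_1,\dots,c(v_1)_{l_1},v_1,o^{\mathrm{eq}},q_1,o^{\mathrm{cm}},\dots,o^{\mathrm{cm}},c(v_L)_1,\dots,c(v_L)_{l_L},v_L,o^{\mathrm{eq}},q_L]$, where independently for each $i$, $l_i\sim\mathrm{Uniform}\{1,\dots,|\mathtt{CONT}(v_i)|\}$ and $c(v_i)_1,\dots,c(v_i)_{l_i}$ are drawn from $\mathtt{CONT}(v_i)$ without replacement. Few-shot data. For $k\in\{0,\dots,K\}$, take $k+1$ sequences with the same vertex list $[v_1,\dots,v_L]$ and independently sampled values and context tokens; the processed document is $\widetilde{\mathtt{seq}}^{(1)},o^{\mathrm{dlm}},\dots,o^{\mathrm{dlm}},\widetilde{\mathtt{seq}}^{(k)}$. The input $\widetilde{\mathtt{inp}}^k$ is this document followed by $o^{\mathrm{dlm}}$ and the prefix $[v_L,o^{\mathrm{eq}},o^{\mathrm{qu}},c(v_1)^{(k+1)}_1,\dots,c(v_1)^{(k+1)}_{l_1},v_1,o^{\mathrm{eq}},q_1^{(k+1)},o^{\mathrm{cm}}]$ of the processed $(k+1)$-th sequence, and the label $\widetilde{\mathtt{lab}}^k$ is the rest of that processed sequence. $\mathcal{D}_{\mathrm{train}}$ is the resulting distribution when training sequences are used. Program $P_{\mathrm{prog}}(\cdot\mid z_{1:T})$ (defined for sentences containing at least one complete previous shot): (i) if $z_T=o^{\mathrm{cm}}$, then $z_{T-3}$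 is a vertex $v_i$; find $v_i$ in the previous shots and the vertex $v_{i+1}$ following it there; output $\mathrm{Uniform}(\mathtt{CONT}(v_{i+1}))$. (ii) if $z_{T-k+1:T}=[c(v_j)_1,\dots,c(v_j)_k]$ is a run of context tokens of $v_j$ ending at $z_T$, output $\mathrm{Uniform}(\mathtt{CONT}(v_j)\cup\{v_j\}\setminus\{c(v_j)_1,\dots,c(v_j)_k\})$. (iii) if $z_T$ is a vertex $v_j$, output $o^{\mathrm{eq}}$ with probability 1. (iv) if $z_T=o^{\mathrm{eq}}$ with $z_{T-1}=v_j$: if $v_j\notin V$, output $\mathrm{Uniform}(\mathtt{VALS}(v_j))$; if $v_j\in V$ and $v_j$ is the first vertex of $V$ in the current sequence, output $\mathrm{Uniform}(\mathtt{VALS}(v_j))$; otherwise let $v_{j_1}$ with value $q_{j_1}$ be the nearest preceding vertex of $V$ in the current sequence (the parent of $v_j$) and output $\mathtt{op}(v_{j_1},v_j)(q_{j_1})$ with probability 1. (v) if $z_T$ is a value, output $o^{\mathrm{cm}}$ with probability 1. *)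

theory Defs
  imports "HOL-Probability.Probability"
begin

(* Tokens: vertex symbols, integer values, context tokens, and the four special tokens
   (=, ",", ?, delimiter). Constructors make the token classes pairwise disjoint. *)
datatype ('v, 'c) tok = Vx 'v | Val int | Ctx 'c | Eq | Cm | Qu | Dlm

definition is_chain :: "'v set \<Rightarrow> ('v \<times> 'v) set \<Rightarrow> 'v list \<Rightarrow> bool" where
  "is_chain V E u \<longleftrightarrow> set u \<subseteq> V \<and> (\<forall>i. Suc i < length u \<longrightarrow> (u ! i, u ! Suc i) \<in> E)"

definition depth :: "'v set \<Rightarrow> ('v \<times> 'v) set \<Rightarrow> enat" where
  "depth V E = Sup {enat (length u) | u. is_chain V E u}"

definition train_vlist :: "'v set \<Rightarrow> ('v \<times> 'v) set \<Rightarrow> nat \<Rightarrow> nat \<Rightarrow> 'v list \<Rightarrow> bool" where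
  "train_vlist V E M M' vs \<longleftrightarrow>
     (\<exists>u u'. is_chain V E u \<and> length u = M \<and> length u' = M' \<and> set u' \<inter> V = {}
             \<and> vs \<in> shuffles u u')"

fun seq_pmf :: "'a pmf list \<Rightarrow> 'a list pmf" where
  "seq_pmf [] = return_pmf []"
| "seq_pmf (p # ps) = bind_pmf p (\<lambda>x. map_pmf (Cons x) (seq_pmf ps))"

fun sample_vals :: "'v set \<Rightarrow> ('v \<times> 'v \<Rightarrow> int) \<Rightarrow> ('v \<Rightarrow> int set) \<Rightarrow> ('v \<times> int) option
                     \<Rightarrow> 'v list \<Rightarrow> int list pmf" where
  "sample_vals V c VALS prev [] = return_pmf []"
| "sample_vals V c VALS prev (v # vs) =
     (if v \<in> V then
        (case prev of
           None \<Rightarrow> bind_pmf (pmf_of_set (VALS v))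
                     (\<lambda>q. map_pmf (Cons q) (sample_vals V c VALS (Some (v, q)) vs))
         | Some (u, p) \<Rightarrow> map_pmf (Cons (p + c (u, v)))
                     (sample_vals V c VALS (Some (v, p + c (u, v))) vs))
      else bind_pmf (pmf_of_set (VALS v)) (\<lambda>q. map_pmf (Cons q) (sample_vals V c VALS prev vs)))"

(* context tokens of v: l ~ Uniform{1..|CONT v|}, then l tokens drawn without replacement
   (ordered), i.e. a uniform list of l distinct elements of CONT v *)
definition ctx_pmf :: "('v \<Rightarrow> 'c set) \<Rightarrow> 'v \<Rightarrow> 'c list pmf" where
  "ctx_pmf CONT v = bind_pmf (pmf_of_set {1..card (CONT v)})
     (\<lambda>l. pmf_of_set {xs. distinct xs \<and> set xs \<subseteq> CONT v \<and> length xs = l})"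

definition shot_pmf :: "'v set \<Rightarrow> ('v \<times> 'v \<Rightarrow> int) \<Rightarrow> ('v \<Rightarrow> int set) \<Rightarrow> ('v \<Rightarrow> 'c set)
                        \<Rightarrow> 'v list \<Rightarrow> ('v \<times> int \<times> 'c list) list pmf" where
  "shot_pmf V c VALS CONT vs =
     bind_pmf (sample_vals V c VALS None vs) (\<lambda>qs.
     map_pmf (\<lambda>cs. zip vs (zip qs cs)) (seq_pmf (map (ctx_pmf CONT) vs)))"

fun join_with :: "'a \<Rightarrow> 'a list list \<Rightarrow> 'a list" where
  "join_with s [] = []"
| "join_with s [x] = x"
| "join_with s (x # y # r) = x @ [s] @ join_with s (y # r)"

fun block :: "'v \<times> int \<times> 'c list \<Rightarrow> ('v, 'c) tok list" where
  "block (v, q, cs) = map Ctx cs @ [Vx v, Eq, Val q]"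

definition proc_shot :: "('v \<times> int \<times> 'c list) list \<Rightarrow> ('v, 'c) tok list" where
  "proc_shot sh = [Vx (fst (last sh)), Eq, Qu] @ join_with Cm (map block sh)"

(* few-shot input/label from shots 1..k+1 (list indices 0..k) *)
definition inp_lab :: "nat \<Rightarrow> ('v \<times> int \<times> 'c list) list list \<Rightarrow> ('v, 'c) tok list \<times> ('v, 'c) tok list" where
  "inp_lab k shots =
     (let sh = shots ! k in
       (join_with Dlm (map proc_shot (take k shots)) @ [Dlm] @
          [Vx (fst (last sh)), Eq, Qu] @ block (hd sh) @ [Cm],
        join_with Cm (map block (tl sh))))"

(* D_train for a given number k of shots; sigma = distribution of the vertex list
   (chain, noise vertices, interleaving) *)
definition D_train :: "'v set \<Rightarrow> ('v \<times> 'v \<Rightarrow> int) \<Rightarrow> ('v \<Rightarrow> int set) \<Rightarrow> ('v \<Rightarrow> 'c set)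
                       \<Rightarrow> 'v list pmf \<Rightarrow> nat \<Rightarrow> (('v, 'c) tok list \<times> ('v, 'c) tok list) pmf" where
  "D_train V c VALS CONT \<sigma> k =
     bind_pmf \<sigma> (\<lambda>vs. map_pmf (inp_lab k) (seq_pmf (replicate (Suc k) (shot_pmf V c VALS CONT vs))))"

definition P_train :: "(('v, 'c) tok list \<times> ('v, 'c) tok list) pmf \<Rightarrow> nat \<Rightarrow> ('v, 'c) tok list
                       \<Rightarrow> ('v, 'c) tok pmf" where
  "P_train D t z = map_pmf (\<lambda>(i, l). l ! t) (cond_pmf D {(i, l). i @ take t l = z})"

fun verts :: "('v, 'c) tok list \<Rightarrow> 'v list" where
  "verts [] = []"
| "verts (Vx v # r) = v # verts r"
| "verts (_ # r) = verts r"

fun pairs :: "('v, 'c) tok list \<Rightarrow> ('v \<times> int) list" where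
  "pairs (Vx u # Eq # Val q # r) = (u, q) # pairs r"
| "pairs [] = []"
| "pairs (_ # r) = pairs r"

fun is_ctx :: "('v, 'c) tok \<Rightarrow> bool" where
  "is_ctx (Ctx _) = True"
| "is_ctx _ = False"

(* current (last, incomplete) sequence and a previous complete shot (the first one) *)
definition cur_seq :: "('v, 'c) tok list \<Rightarrow> ('v, 'c) tok list" where
  "cur_seq z = rev (takeWhile (\<lambda>x. x \<noteq> Dlm) (rev z))"

definition prev_shot :: "('v, 'c) tok list \<Rightarrow> ('v, 'c) tok list" where
  "prev_shot z = takeWhile (\<lambda>x. x \<noteq> Dlm) z"

(* P_prog(. | z); "drop 3" removes the header v_L, =, ? of a sequence.
   On inputs not covered by rules (i)-(v) the output is irrelevant (arbitrary). *)
definition P_prog :: "'v set \<Rightarrow> ('v \<times> 'v \<Rightarrow> int) \<Rightarrow> ('v \<Rightarrow> int set) \<Rightarrow> ('v \<Rightarrow> 'c set)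
                      \<Rightarrow> ('v, 'c) tok list \<Rightarrow> ('v, 'c) tok pmf" where
  "P_prog V c VALS CONT z =
     (case rev z of
        Cm # _ \<Rightarrow>
          (let i = length (verts (drop 3 (cur_seq z)))
           in pmf_of_set (Ctx ` CONT (verts (drop 3 (prev_shot z)) ! i)))
      | Ctx x # _ \<Rightarrow>
          (let run = takeWhile is_ctx (rev z); vj = (THE v. x \<in> CONT v)
           in pmf_of_set ((Ctx ` CONT vj \<union> {Vx vj}) - set run))
      | Vx v # _ \<Rightarrow> return_pmf Eq
      | Eq # Vx vj # _ \<Rightarrow>
          (if vj \<notin> V then pmf_of_set (Val ` VALS vj)
           else (let pre = filter (\<lambda>(u, q). u \<in> V) (pairs (drop 3 (cur_seq z)))
                 in if pre = [] then pmf_of_set (Val ` VALS vj)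
                    else return_pmf (Val (snd (last pre) + c (fst (last pre), vj)))))
      | Val q # _ \<Rightarrow> return_pmf Cm
      | _ \<Rightarrow> return_pmf Dlm)"

definition nll :: "real \<Rightarrow> ennreal" where
  "nll p = (if p = 0 then \<infinity> else ennreal (- ln p))"

definition train_loss :: "(nat \<Rightarrow> (('v, 'c) tok list \<times> ('v, 'c) tok list) pmf) \<Rightarrow> nat
                          \<Rightarrow> (('v, 'c) tok list \<Rightarrow> ('v, 'c) tok pmf) \<Rightarrow> ennreal" where
  "train_loss D K P =
     (\<Sum>k\<in>{1..<K}. \<integral>\<^sup>+ x. (\<Sum>t\<in>{1..<length (snd x)}.
          nll (pmf (P (fst x @ take t (snd x))) (snd x ! t))) \<partial>measure_pmf (D k))"

end

theory Submission
  imports Defs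
begin


definition CP :: "'a pmf \<Rightarrow> ('a \<Rightarrow> bool) \<Rightarrow> ('a \<Rightarrow> 'b) \<Rightarrow> 'b pmf \<Rightarrow> bool" where
  "CP D E g Q \<longleftrightarrow> (\<forall>y. measure_pmf.prob D {x. E x \<and> g x = y} = pmf Q y * measure_pmf.prob D {x. E x})"

lemma measure_bind_pmf':
  "measure_pmf.prob (bind_pmf M N) X = (\<integral>x. measure_pmf.prob (N x) X \<partial>M)"
proof -
  have "ennreal (measure_pmf.prob (bind_pmf M N) X) = (\<integral>\<^sup>+x. ennreal (measure_pmf.prob (N x) X) \<partial>M)"
    by (simp add: measure_pmf.emeasure_eq_measure[symmetric])
  also have "\<dots> = ennreal (\<integral>x. measure_pmf.prob (N x) X \<partial>M)"
    by (rule nn_integral_eq_integral)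
       (auto intro!: measure_pmf.integrable_const_bound[where B=1])
  finally show ?thesis by (simp add: integral_nonneg_AE)
qed

lemma CP_bind:
  assumes "\<And>r. r \<in> set_pmf R \<Longrightarrow> CP (C r) E g Q"
  shows "CP (bind_pmf R C) E g Q"
  unfolding CP_def
proof
  fix y
  have "measure_pmf.prob (bind_pmf R C) {x. E x \<and> g x = y}
       = (\<integral>r. pmf Q y * measure_pmf.prob (C r) {x. E x} \<partial>R)"
    unfolding measure_bind_pmf'
    by (rule integral_cong_AE) (auto simp: AE_measure_pmf_iff assms[unfolded CP_def])
  also have "\<dots> = pmf Q y * measure_pmf.prob (bind_pmf R C) {x. E x}"
    unfolding measure_bind_pmf' by simp
  finally show "measure_pmf.prob (bind_pmf R C) {x. E x \<and> g x = y} = pmf Q y * measure_pmf.prob (bind_pmf R C) {x. E x}" .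
qed

lemma CP_map: "CP (map_pmf f D) E g Q \<longleftrightarrow> CP D (\<lambda>x. E (f x)) (\<lambda>x. g (f x)) Q"
  unfolding CP_def by (simp add: measure_map_pmf vimage_def)

lemma CP_empty:
  assumes "\<And>x. x \<in> set_pmf D \<Longrightarrow> \<not> E x"
  shows "CP D E g Q"
proof -
  have "measure_pmf.prob D {x. E x \<and> g x = y} = 0" for y
    using assms by (subst measure_pmf_zero_iff) auto
  moreover have "measure_pmf.prob D {x. E x} = 0"
    using assms by (subst measure_pmf_zero_iff) auto
  ultimately show ?thesis unfolding CP_def by simp
qed

lemma measure_cong_set_pmf:
  assumes "\<And>x. x \<in> set_pmf D \<Longrightarrow> x \<in> A \<longleftrightarrow> x \<in> B"
  shows "measure_pmf.prob D A = measure_pmf.prob D B"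
proof -
  have "measure_pmf.prob D A = measure_pmf.prob D (A \<inter> set_pmf D)"
    by (simp add: measure_Int_set_pmf)
  also have "A \<inter> set_pmf D = B \<inter> set_pmf D" using assms by auto
  also have "measure_pmf.prob D (B \<inter> set_pmf D) = measure_pmf.prob D B"
    by (simp add: measure_Int_set_pmf)
  finally show ?thesis .
qed

lemma CP_cong:
  assumes "\<And>x. x \<in> set_pmf D \<Longrightarrow> E x = E' x"
    and "\<And>x. x \<in> set_pmf D \<Longrightarrow> E x \<Longrightarrow> g x = g' x"
  shows "CP D E g Q \<longleftrightarrow> CP D E' g' Q"
proof -
  have "measure_pmf.prob D {x. E x \<and> g x = y} = measure_pmf.prob D {x. E' x \<and> g' x = y}" for y
    by (rule measure_cong_set_pmf) (use assms in auto)
  moreover have "measure_pmf.prob D {x. E x} = measure_pmf.prob D {x. E' x}"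
    by (rule measure_cong_set_pmf) (use assms in auto)
  ultimately show ?thesis unfolding CP_def by simp
qed

lemma CP_det:
  assumes "\<And>x. x \<in> set_pmf D \<Longrightarrow> E x \<Longrightarrow> g x = y0"
  shows "CP D E g (return_pmf y0)"
  unfolding CP_def
proof
  fix y
  show "measure_pmf.prob D {x. E x \<and> g x = y} = pmf (return_pmf y0) y * measure_pmf.prob D {x. E x}"
  proof (cases "y = y0")
    case True
    then show ?thesis by (simp add: pmf_return) (rule measure_cong_set_pmf, use assms in auto)
  next
    case False
    then show ?thesis using assms by (simp add: pmf_return measure_pmf_zero_iff) blast
  qed
qed

lemma CP_bind_gen:
  assumes "\<And>x \<omega>. x \<in> set_pmf C \<Longrightarrow> \<omega> \<in> set_pmf (K x) \<Longrightarrow> E \<omega> = E' x"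
    and "\<And>x \<omega>. x \<in> set_pmf C \<Longrightarrow> \<omega> \<in> set_pmf (K x) \<Longrightarrow> E' x \<Longrightarrow> g \<omega> = g' x"
    and "CP C E' g' Q"
  shows "CP (bind_pmf C K) E g Q"
  unfolding CP_def
proof
  fix y
  have 1: "measure_pmf.prob (K x) {\<omega>. E \<omega> \<and> g \<omega> = y} = indicator {x. E' x \<and> g' x = y} x"
    if "x \<in> set_pmf C" for x
  proof (cases "E' x \<and> g' x = y")
    case True
    then have "measure_pmf.prob (K x) {\<omega>. E \<omega> \<and> g \<omega> = y} = measure_pmf.prob (K x) UNIV"
      by (intro measure_cong_set_pmf) (use assms(1,2) that in auto)
    then show ?thesis using True by simp
  next
    case False
    then show ?thesis using assms(1,2) that by (auto simp: measure_pmf_zero_iff)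
  qed
  have 2: "measure_pmf.prob (K x) {\<omega>. E \<omega>} = indicator {x. E' x} x"
    if "x \<in> set_pmf C" for x
  proof (cases "E' x")
    case True
    then have "measure_pmf.prob (K x) {\<omega>. E \<omega>} = measure_pmf.prob (K x) UNIV"
      by (intro measure_cong_set_pmf) (use assms(1,2) that in auto)
    then show ?thesis using True by simp
  next
    case False
    then show ?thesis using assms(1,2) that by (auto simp: measure_pmf_zero_iff)
  qed
  have "measure_pmf.prob (bind_pmf C K) {\<omega>. E \<omega> \<and> g \<omega> = y} = (\<integral>x. indicator {x. E' x \<and> g' x = y} x \<partial>C)"
    unfolding measure_bind_pmf' by (rule integral_cong_AE) (auto simp: AE_measure_pmf_iff 1)
  also have "\<dots> = measure_pmf.prob C {x. E' x \<and> g' x = y}" by simp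
  also have "\<dots> = pmf Q y * measure_pmf.prob C {x. E' x}" using assms(3) unfolding CP_def by blast
  also have "measure_pmf.prob C {x. E' x} = (\<integral>x. indicator {x. E' x} x \<partial>C)" by simp
  also have "\<dots> = measure_pmf.prob (bind_pmf C K) {\<omega>. E \<omega>}"
    unfolding measure_bind_pmf' by (rule integral_cong_AE) (auto simp: AE_measure_pmf_iff 2)
  finally show "measure_pmf.prob (bind_pmf C K) {\<omega>. E \<omega> \<and> g \<omega> = y} = pmf Q y * measure_pmf.prob (bind_pmf C K) {\<omega>. E \<omega>}" .
qed

lemma CP_indep:
  assumes "\<And>q. q \<in> set_pmf A \<Longrightarrow> measure_pmf.prob (K q) {x. E x} = e"
    and "\<And>q x. q \<in> set_pmf A \<Longrightarrow> x \<in> set_pmf (K q) \<Longrightarrow> E x \<Longrightarrow> g x = G q"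
  shows "CP (bind_pmf A K) E g (map_pmf G A)"
  unfolding CP_def
proof
  fix y
  have 1: "measure_pmf.prob (K q) {x. E x \<and> g x = y} = indicator {q. G q = y} q * e"
    if "q \<in> set_pmf A" for q
  proof (cases "G q = y")
    case True
    then have "measure_pmf.prob (K q) {x. E x \<and> g x = y} = measure_pmf.prob (K q) {x. E x}"
      by (intro measure_cong_set_pmf) (use assms(2) that in auto)
    then show ?thesis using True assms(1) that by simp
  next
    case False
    then show ?thesis using assms(2) that by (auto simp: measure_pmf_zero_iff)
  qed
  have "measure_pmf.prob (bind_pmf A K) {x. E x \<and> g x = y} = (\<integral>q. indicator {q. G q = y} q * e \<partial>A)"
    unfolding measure_bind_pmf' by (rule integral_cong_AE) (auto simp: AE_measure_pmf_iff 1)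
  also have "\<dots> = measure_pmf.prob A {q. G q = y} * e" by simp
  also have "measure_pmf.prob A {q. G q = y} = pmf (map_pmf G A) y"
    by (simp add: pmf_map vimage_def)
  also have "e = measure_pmf.prob (bind_pmf A K) {x. E x}"
    unfolding measure_bind_pmf' by (subst integral_cong_AE[where g="\<lambda>_. e"]) (auto simp: AE_measure_pmf_iff assms(1))
  finally show "measure_pmf.prob (bind_pmf A K) {x. E x \<and> g x = y} = pmf (map_pmf G A) y * measure_pmf.prob (bind_pmf A K) {x. E x}" .
qed

lemma measure_cond_pmf':
  assumes "set_pmf D \<inter> A \<noteq> {}"
  shows "measure_pmf.prob (cond_pmf D A) B = measure_pmf.prob D (B \<inter> A) / measure_pmf.prob D A"
proof -
  have "ennreal (measure_pmf.prob (cond_pmf D A) B) = emeasure (measure_pmf (cond_pmf D A)) B"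
    by (simp add: measure_pmf.emeasure_eq_measure)
  also have "\<dots> = emeasure (uniform_measure (measure_pmf D) A) B"
    by (simp add: cond_pmf.rep_eq[OF assms])
  also have "\<dots> = emeasure D (B \<inter> A) / emeasure D A"
    by (simp add: emeasure_uniform_measure Int_commute)
  also have "\<dots> = ennreal (measure_pmf.prob D (B \<inter> A) / measure_pmf.prob D A)"
    using measure_measure_pmf_not_zero[OF assms]
    by (simp add: measure_pmf.emeasure_eq_measure divide_ennreal measure_nonneg zero_less_measure_iff)
  finally show ?thesis by (simp add: ennreal_inj)
qed

lemma CP_cond:
  assumes "CP D E g Q" and "x0 \<in> set_pmf D" "E x0"
  shows "map_pmf g (cond_pmf D {x. E x}) = Q"
proof (rule pmf_eqI)
  fix y
  have pos: "measure_pmf.prob D {x. E x} > 0" using assms measure_pmf_posI by fastforce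
  have ne: "set_pmf D \<inter> {x. E x} \<noteq> {}" using assms by auto
  have "pmf (map_pmf g (cond_pmf D {x. E x})) y = measure_pmf.prob (cond_pmf D {x. E x}) (g -` {y})"
    by (simp add: pmf_map)
  also have "\<dots> = measure_pmf.prob D {x. E x \<and> g x = y} / measure_pmf.prob D {x. E x}"
    unfolding measure_cond_pmf'[OF ne] by (rule arg_cong2[where f="(/)"]) (auto intro: arg_cong[where f="measure_pmf.prob D"])
  also have "\<dots> = pmf Q y" using assms(1) pos unfolding CP_def by simp
  finally show "pmf (map_pmf g (cond_pmf D {x. E x})) y = pmf Q y" .
qed



definition DL :: "'c set \<Rightarrow> nat \<Rightarrow> 'c list set" where
  "DL A l = {xs. distinct xs \<and> set xs \<subseteq> A \<and> length xs = l}"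

lemma finite_DL: "finite A \<Longrightarrow> finite (DL A l)"
  unfolding DL_def by (rule finite_subset[OF _ finite_lists_length_eq[of A l]]) auto

lemma card_DL_nat: "finite A \<Longrightarrow> l \<le> card A \<Longrightarrow> card (DL A l) = \<Prod>{card A - l + 1 .. card A}"
  unfolding DL_def using card_lists_distinct_length_eq[of A l]
  by (simp add: conj_commute conj_left_commute)

lemma card_DL: "finite A \<Longrightarrow> l \<le> card A \<Longrightarrow> real (card (DL A l)) = fact (card A) / fact (card A - l)"
proof -
  assume a: "finite A" "l \<le> card A"
  have "(fact (card A) :: nat) = fact (card A - l) * \<Prod>{Suc (card A - l) .. card A}"
    by (rule fact_eq_fact_times) simp
  then have "(fact (card A) :: real) = fact (card A - l) * real (\<Prod>{card A - l + 1 .. card A})"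
    by (metis Suc_eq_plus1 of_nat_fact of_nat_mult)
  then show ?thesis using a by (simp add: card_DL_nat field_simps)
qed

lemma DL_nonempty: "finite A \<Longrightarrow> l \<le> card A \<Longrightarrow> DL A l \<noteq> {}"
proof -
  assume a: "finite A" "l \<le> card A"
  obtain xs where xs: "set xs = A" "distinct xs" using finite_distinct_list[OF a(1)] by blast
  have "take l xs \<in> DL A l" using xs a by (auto simp: DL_def distinct_card dest: in_set_takeD)
  then show ?thesis by blast
qed

lemma card_DL_prefix:
  assumes "finite A" "p \<in> DL A a" "a \<le> l"
  shows "card {xs \<in> DL A l. take a xs = p} = card (DL (A - set p) (l - a))"
proof -
  have "{xs \<in> DL A l. take a xs = p} = (\<lambda>ys. p @ ys) ` DL (A - set p) (l - a)"
  proof (intro equalityI subsetI)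
    fix xs assume "xs \<in> {xs \<in> DL A l. take a xs = p}"
    then have xs: "distinct xs" "set xs \<subseteq> A" "length xs = l" "take a xs = p" by (auto simp: DL_def)
    have "xs = p @ drop a xs" using xs(4) by (metis append_take_drop_id)
    moreover have "drop a xs \<in> DL (A - set p) (l - a)"
      using xs by (auto simp: DL_def dest: in_set_dropD)
        (metis append_take_drop_id distinct_append disjoint_iff set_take_disj_set_drop_if_distinct)
    ultimately show "xs \<in> (\<lambda>ys. p @ ys) ` DL (A - set p) (l - a)" by blast
  next
    fix xs assume "xs \<in> (\<lambda>ys. p @ ys) ` DL (A - set p) (l - a)"
    then obtain ys where "xs = p @ ys" "ys \<in> DL (A - set p) (l - a)" by blast
    then show "xs \<in> {xs \<in> DL A l. take a xs = p}" using assms by (auto simp: DL_def)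
  qed
  moreover have "inj ((@) p)" by (simp add: inj_def)
  ultimately show ?thesis by (simp add: card_image inj_on_subset)
qed

lemma prob_prefix:
  assumes "finite A" "p \<in> DL A a" "a \<le> l" "l \<le> card A"
  shows "measure_pmf.prob (pmf_of_set (DL A l)) {xs. take a xs = p} = fact (card A - a) / fact (card A)"
proof -
  have pa: "card (set p) = a" "set p \<subseteq> A" using assms(2) by (auto simp: DL_def distinct_card)
  have cA: "card (A - set p) = card A - a" using pa assms(1) by (simp add: card_Diff_subset finite_subset)
  have ne: "DL A l \<noteq> {}" using DL_nonempty assms by blast
  have "measure_pmf.prob (pmf_of_set (DL A l)) {xs. take a xs = p}
        = real (card {xs \<in> DL A l. take a xs = p}) / real (card (DL A l))"
    using ne finite_DL[OF assms(1)] by (simp add: measure_pmf_of_set Int_def)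
  also have "\<dots> = real (card (DL (A - set p) (l - a))) / real (card (DL A l))"
    using card_DL_prefix[OF assms(1-3)] by simp
  also have "\<dots> = (fact (card A - a) / fact (card A - a - (l - a))) / (fact (card A) / fact (card A - l))"
    using assms cA by (simp add: card_DL)
  also have "card A - a - (l - a) = card A - l" using assms by simp
  also have "(fact (card A - a) / fact (card A - l)) / (fact (card A) / fact (card A - l)) = (fact (card A - a) / fact (card A) :: real)"
    by (simp add: field_simps)
  finally show ?thesis .
qed

lemma set_ctx_pmf:
  assumes "finite (CONT v)" "CONT v \<noteq> {}"
  shows "set_pmf (ctx_pmf CONT v) = (\<Union>l\<in>{1..card (CONT v)}. DL (CONT v) l)"
proof -
  have "{1..card (CONT v)} \<noteq> {}" using assms by (simp add: card_gt_0_iff Suc_le_eq)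
  moreover have "set_pmf (pmf_of_set (DL (CONT v) l)) = DL (CONT v) l" if "l \<in> {1..card (CONT v)}" for l
    using that assms by (intro set_pmf_of_set) (auto simp: finite_DL DL_nonempty)
  ultimately show ?thesis unfolding ctx_pmf_def DL_def[symmetric] by simp
qed

lemma sum_if_ge: "(\<Sum>l\<in>{1..(n::nat)}. if b \<le> l then c else 0) = real (n + 1 - max 1 b) * (c::real)"
proof -
  have "(\<Sum>l\<in>{1..n}. if b \<le> l then c else 0) = (\<Sum>l\<in>{l\<in>{1..n}. b \<le> l}. c)"
    by (rule sum.inter_filter[symmetric]) simp
  also have "{l\<in>{1..n}. b \<le> l} = {max 1 b..n}" by auto
  finally show ?thesis by simp
qed

lemma sum_if_eq: "(\<Sum>l\<in>{1..(n::nat)}. if l = b then c else 0) = (if 1 \<le> b \<and> b \<le> n then c else (0::real))"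
proof -
  have "(\<Sum>l\<in>{1..n}. if l = b then c else 0) = (if b \<in> {1..n} then c else 0)"
    by (rule sum.delta) simp
  then show ?thesis by simp
qed

lemma measure_ctx_pmf:
  assumes "finite (CONT v)" "CONT v \<noteq> {}"
  shows "measure_pmf.prob (ctx_pmf CONT v) X
    = (\<Sum>l\<in>{1..card (CONT v)}. measure_pmf.prob (pmf_of_set (DL (CONT v) l)) X) / card (CONT v)"
proof -
  have "{1..card (CONT v)} \<noteq> {}" using assms by (simp add: card_gt_0_iff Suc_le_eq)
  then show ?thesis unfolding ctx_pmf_def DL_def[symmetric] measure_bind_pmf'
    by (simp add: integral_pmf_of_set)
qed

lemma CP_ctx:
  assumes fin: "finite (CONT v)" "CONT v \<noteq> {}"
    and cs0: "cs0 \<in> set_pmf (ctx_pmf CONT v)" and a: "a \<le> length cs0"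
  shows "CP (ctx_pmf CONT v) (\<lambda>cs. take a cs = take a cs0)
           (\<lambda>cs. if a < length cs then Ctx (cs ! a) else Vx v)
           (if a = 0 then pmf_of_set (Ctx ` CONT v)
            else pmf_of_set ((Ctx ` CONT v \<union> {Vx v}) - Ctx ` set (take a cs0)))"
proof -
  define A where "A = CONT v"
  define n where "n = card A"
  define p where "p = take a cs0"
  define pr :: "nat \<Rightarrow> real" where "pr b = fact (n - b) / fact n" for b
  define U where "U l = pmf_of_set (DL A l)" for l
  have finA: "finite A" and neA: "A \<noteq> {}" using fin by (auto simp: A_def)
  have n0: "n > 0" using finA neA by (simp add: n_def card_gt_0_iff)
  obtain l0 where l0: "l0 \<in> {1..n}" "cs0 \<in> DL A l0"
    using cs0 set_ctx_pmf[of CONT v, OF fin] by (auto simp: A_def n_def)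
  have pDL: "p \<in> DL A a" using l0 a by (auto simp: DL_def p_def dest: in_set_takeD)
  have an: "a \<le> n" using l0 a by (auto simp: DL_def)
  have lp: "length p = a" using pDL by (simp add: DL_def)
  have setU: "set_pmf (U l) = DL A l" if "l \<in> {1..n}" for l
    unfolding U_def using that by (intro set_pmf_of_set) (auto simp: finite_DL[OF finA] DL_nonempty[OF finA] n_def)
  have mc: "measure_pmf.prob (ctx_pmf CONT v) X = (\<Sum>l\<in>{1..n}. measure_pmf.prob (U l) X) / n" for X
    using measure_ctx_pmf[of CONT v, OF fin] by (simp add: A_def n_def U_def)
  have pp: "measure_pmf.prob (U l) {xs. take b xs = q} = pr b" if "q \<in> DL A b" "b \<le> l" "l \<in> {1..n}" for q b l
    using prob_prefix[OF finA that(1,2)] that(3) by (simp add: U_def pr_def n_def)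
  have pz: "measure_pmf.prob (U l) {xs. take b xs = q} = 0" if "length q = b" "l < b" "l \<in> {1..n}" for q b l
    using that by (subst measure_pmf_zero_iff) (auto simp: setU DL_def)
  have kE: "measure_pmf.prob (U l) {xs. take a xs = p} = (if a \<le> l then pr a else 0)" if "l \<in> {1..n}" for l
    using pp[OF pDL _ that] pz[of p a l] that pDL by (auto simp: DL_def)
  have kC: "measure_pmf.prob (U l) {xs. take a xs = p \<and> (if a < length xs then Ctx (xs ! a) else Vx v) = Ctx x}
        = (if a + 1 \<le> l then pr (a + 1) else 0)" if "l \<in> {1..n}" "x \<in> A - set p" for l x
  proof -
    have "measure_pmf.prob (U l) {xs. take a xs = p \<and> (if a < length xs then Ctx (xs ! a) else Vx v) = Ctx x}
        = measure_pmf.prob (U l) {xs. take (a + 1) xs = p @ [x]}"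
      by (rule measure_cong_set_pmf) (auto simp: take_Suc_conv_app_nth lp)
    moreover have "p @ [x] \<in> DL A (a + 1)" using pDL that by (auto simp: DL_def)
    ultimately show ?thesis using pp[of "p @ [x]" "a+1" l] pz[of "p @ [x]" "a+1" l] that
      by (auto simp: DL_def)
  qed
  have kV: "measure_pmf.prob (U l) {xs. take a xs = p \<and> (if a < length xs then Ctx (xs ! a) else Vx v) = Vx v}
        = (if l = a then pr a else 0)" if "l \<in> {1..n}" for l
  proof -
    have "measure_pmf.prob (U l) {xs. take a xs = p \<and> (if a < length xs then Ctx (xs ! a) else Vx v) = Vx v}
        = measure_pmf.prob (U l) {xs. l = a \<and> take a xs = p}"
      by (rule measure_cong_set_pmf) (use pDL in \<open>auto simp: setU[OF that] DL_def\<close>)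
    then show ?thesis using kE[OF that] by (cases "l = a") auto
  qed
  have kO: "measure_pmf.prob (U l) {xs. take a xs = p \<and> (if a < length xs then Ctx (xs ! a) else Vx v) = y} = 0"
    if lin: "l \<in> {1..n}" "y \<noteq> Vx v" "y \<notin> Ctx ` (A - set p)" for l y
  proof (subst measure_pmf_zero_iff, rule ccontr)
    assume "set_pmf (U l) \<inter> {xs. take a xs = p \<and> (if a < length xs then Ctx (xs ! a) else Vx v) = y} \<noteq> {}"
    then obtain xs where xs: "xs \<in> DL A l" "take a xs = p" "(if a < length xs then Ctx (xs ! a) else Vx v) = y"
    proof -
      have "set_pmf (U l) = DL A l" using setU lin(1) by blast
      then show ?thesis using \<open>set_pmf (U l) \<inter> _ \<noteq> {}\<close> that by blast
    qed
    then have al: "a < length xs" using lin by (auto split: if_splits)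
    have "xs ! a \<in> A" using xs al by (auto simp: DL_def)
    moreover have "xs ! a \<notin> set p"
    proof
      assume "xs ! a \<in> set p"
      then obtain i where "i < a" "xs ! i = xs ! a" using xs(2) al by (auto simp: in_set_conv_nth)
      then show False using xs(1) al by (auto simp: DL_def nth_eq_iff_index_eq)
    qed
    ultimately show False using xs al lin by auto
  qed
  have cnt1: "card ({1..n} \<inter> {l. b \<le> l}) = n + 1 - max 1 b" for b
  proof -
    have "{1..n} \<inter> {l. b \<le> l} = {max 1 b..n}" by auto
    then show ?thesis by simp
  qed
  have sE: "(\<Sum>l\<in>{1..n}. measure_pmf.prob (U l) {xs. take a xs = p}) = real (n + 1 - max 1 a) * pr a"
    using sum_if_ge[where n=n and b=a and c="pr a"] by (simp add: kE del: One_nat_def)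
  have prS: "real (n - a) * pr (a + 1) = pr a" if "a < n"
  proof -
    have "fact (n - a) = real (n - a) * fact (n - (a + 1))"
      using that fact_reduce[of "n - a", where 'a=real] by (simp add: Suc_diff_Suc)
    then show ?thesis unfolding pr_def by (simp only: times_divide_eq_right)
  qed
  have cardS: "card ((Ctx ` A \<union> {Vx v}) - Ctx ` set p) = n - a + 1"
  proof -
    have "(Ctx ` A \<union> {Vx v}) - Ctx ` set p = insert (Vx v) (Ctx ` (A - set p))" by auto
    moreover have "card (Ctx ` (A - set p)) = n - a"
    proof -
      have "card (Ctx ` (A - set p)) = card (A - set p)" by (rule card_image) (simp add: inj_on_def)
      also have "\<dots> = card A - card (set p)" using pDL finA by (intro card_Diff_subset) (auto simp: DL_def)
      finally show ?thesis using pDL by (simp add: DL_def distinct_card n_def)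
    qed
    moreover have "Vx v \<notin> Ctx ` (A - set p)" by auto
    ultimately show ?thesis using finA by (simp add: card_insert_if)
  qed
  have cardC: "card (Ctx ` A) = card A" by (rule card_image) (simp add: inj_on_def)
  have finS: "finite ((Ctx ` A \<union> {Vx v}) - Ctx ` set p)" using finA by simp
  define Q where "Q = (if a = 0 then pmf_of_set (Ctx ` A) else pmf_of_set ((Ctx ` A \<union> {Vx v}) - Ctx ` set p))"
  have PE: "measure_pmf.prob (ctx_pmf CONT v) {xs. take a xs = p} = real (n + 1 - max 1 a) * pr a / n"
    using mc sE by simp
  have main: "measure_pmf.prob (ctx_pmf CONT v) {xs. take a xs = p \<and> (if a < length xs then Ctx (xs ! a) else Vx v) = y}
     = pmf Q y * measure_pmf.prob (ctx_pmf CONT v) {xs. take a xs = p}" for y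
  proof -
    let ?F = "{xs. take a xs = p \<and> (if a < length xs then Ctx (xs ! a) else Vx v) = y}"
    have LHS: "measure_pmf.prob (ctx_pmf CONT v) ?F = (\<Sum>l\<in>{1..n}. measure_pmf.prob (U l) ?F) / n" by (rule mc)
    show ?thesis
    proof (cases "y \<in> Ctx ` (A - set p)")
      case True
      then obtain x where x: "y = Ctx x" "x \<in> A - set p" by auto
      have "set p \<subset> A" using x pDL by (auto simp: DL_def)
      then have "card (set p) < card A" using finA by (simp add: psubset_card_mono)
      then have an': "a < n" using pDL by (simp add: DL_def distinct_card n_def)
      have "(\<Sum>l\<in>{1..n}. measure_pmf.prob (U l) ?F) = real (n - a) * pr (a + 1)"
        using x sum_if_ge[where n=n and b="a+1" and c="pr (a+1)"] by (simp add: kC del: One_nat_def)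
      also have "\<dots> = pr a" using prS an' by simp
      finally have L: "measure_pmf.prob (ctx_pmf CONT v) ?F = pr a / n" using LHS by simp
      show ?thesis
      proof (cases "a = 0")
        case True
        have q: "pmf Q y = 1 / n" using True x finA neA cardC by (simp add: Q_def pmf_of_set n_def)
        have "pr 1 = 1 / n" using n0 fact_reduce[of n, where 'a=real] by (simp add: pr_def)
        then have "pr 0 = n * pr 1" using n0 by (simp add: pr_def)
        then show ?thesis unfolding L PE q using True n0 prS an' by simp
      next
        case False
        then have "y \<in> (Ctx ` A \<union> {Vx v}) - Ctx ` set p" using x by auto
        then have q: "pmf Q y = 1 / real (n - a + 1)"
          using False finS cardS by (simp add: Q_def) (subst pmf_of_set; auto)
        have e: "real (n + 1 - max 1 a) = real (n - a + 1)" using False an' by simp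
        show ?thesis unfolding L PE q e using n0 by (simp del: of_nat_Suc add: field_simps)
      qed
    next
      case notC: False
      show ?thesis
      proof (cases "y = Vx v")
        case True
        have "(\<Sum>l\<in>{1..n}. measure_pmf.prob (U l) ?F) = (if 1 \<le> a then pr a else 0)"
          using True an sum_if_eq[where n=n and b=a and c="pr a"] by (simp add: kV del: One_nat_def)
        then have L: "measure_pmf.prob (ctx_pmf CONT v) ?F = (if 1 \<le> a then pr a else 0) / n" using LHS by simp
        show ?thesis
        proof (cases "a = 0")
          case True
          have "pmf Q y = 0" using True \<open>y = Vx v\<close> finA neA by (auto simp: Q_def pmf_of_set indicator_def)
          then show ?thesis unfolding L using True by simp
        next
          case False
          then have "y \<in> (Ctx ` A \<union> {Vx v}) - Ctx ` set p" using True by auto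
          then have q: "pmf Q y = 1 / real (n - a + 1)"
            using False finS cardS by (simp add: Q_def) (subst pmf_of_set; auto)
          have e: "real (n + 1 - max 1 a) = real (n - a + 1)" using False an by simp
          show ?thesis unfolding L PE q e using n0 False by (simp del: of_nat_Suc add: field_simps)
        qed
      next
        case False
        have "(\<Sum>l\<in>{1..n}. measure_pmf.prob (U l) ?F) = 0"
          using False notC by (simp add: kO)
        moreover have "pmf Q y = 0"
        proof (cases "a = 0")
          case True
          then have "y \<notin> Ctx ` A" using notC lp by auto
          then show ?thesis using True finA neA by (simp add: Q_def pmf_of_set indicator_def)
        next
          case a0: False
          have "y \<notin> (Ctx ` A \<union> {Vx v}) - Ctx ` set p" using notC False by auto
          moreover have "Vx v \<in> (Ctx ` A \<union> {Vx v}) - Ctx ` set p" by auto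
          ultimately show ?thesis using a0 finS by (simp add: Q_def pmf_of_set indicator_def)
        qed
        ultimately show ?thesis using LHS by simp
      qed
    qed
  qed
  show ?thesis unfolding CP_def A_def[symmetric] p_def[symmetric] Q_def[symmetric] using main by blast
qed



definition vstep :: "'v set \<Rightarrow> ('v \<times> 'v \<Rightarrow> int) \<Rightarrow> ('v \<Rightarrow> int set) \<Rightarrow> ('v \<times> int) option \<Rightarrow> 'v \<Rightarrow> int pmf" where
  "vstep V c VALS prev v = (if v \<in> V then (case prev of None \<Rightarrow> pmf_of_set (VALS v)
                              | Some (u, p) \<Rightarrow> return_pmf (p + c (u, v))) else pmf_of_set (VALS v))"

definition upd :: "'v set \<Rightarrow> ('v \<times> int) option \<Rightarrow> 'v \<Rightarrow> int \<Rightarrow> ('v \<times> int) option" where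
  "upd V prev v q = (if v \<in> V then Some (v, q) else prev)"

fun gen :: "'v set \<Rightarrow> ('v \<times> 'v \<Rightarrow> int) \<Rightarrow> ('v \<Rightarrow> int set) \<Rightarrow> ('v \<Rightarrow> 'c set) \<Rightarrow> ('v \<times> int) option
             \<Rightarrow> 'v list \<Rightarrow> ('v \<times> int \<times> 'c list) list pmf" where
  "gen V c VALS CONT prev [] = return_pmf []"
| "gen V c VALS CONT prev (v # vs) = bind_pmf (vstep V c VALS prev v) (\<lambda>q. bind_pmf (ctx_pmf CONT v) (\<lambda>cs.
      map_pmf (Cons (v, q, cs)) (gen V c VALS CONT (upd V prev v q) vs)))"

lemma sample_vals_step:
  "sample_vals V c VALS prev (v # vs) = bind_pmf (vstep V c VALS prev v) (\<lambda>q. map_pmf (Cons q) (sample_vals V c VALS (upd V prev v q) vs))"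
  by (cases prev) (auto simp: vstep_def upd_def bind_return_pmf)

lemma gen_eq:
  "bind_pmf (sample_vals V c VALS prev vs) (\<lambda>qs. map_pmf (\<lambda>cs. zip vs (zip qs cs)) (seq_pmf (map (ctx_pmf CONT) vs)))
   = gen V c VALS CONT prev vs"
proof (induction vs arbitrary: prev)
  case Nil
  then show ?case by (simp add: bind_return_pmf)
next
  case (Cons v vs)
  let ?SV = "\<lambda>q. sample_vals V c VALS (upd V prev v q) vs"
  let ?SR = "seq_pmf (map (ctx_pmf CONT) vs)"
  have "bind_pmf (sample_vals V c VALS prev (v # vs)) (\<lambda>qs. map_pmf (\<lambda>cs. zip (v # vs) (zip qs cs)) (seq_pmf (map (ctx_pmf CONT) (v # vs))))
     = bind_pmf (vstep V c VALS prev v) (\<lambda>q. bind_pmf (?SV q) (\<lambda>qs. bind_pmf (ctx_pmf CONT v) (\<lambda>cc.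
          map_pmf (\<lambda>cs. (v, q, cc) # zip vs (zip qs cs)) ?SR)))"
    unfolding sample_vals_step
    by (simp del: sample_vals.simps add: bind_assoc_pmf bind_return_pmf map_bind_pmf bind_map_pmf map_pmf_comp)
  also have "\<dots> = bind_pmf (vstep V c VALS prev v) (\<lambda>q. bind_pmf (ctx_pmf CONT v) (\<lambda>cc. bind_pmf (?SV q) (\<lambda>qs.
          map_pmf (\<lambda>cs. (v, q, cc) # zip vs (zip qs cs)) ?SR)))"
    by (subst bind_commute_pmf) rule
  also have "\<dots> = bind_pmf (vstep V c VALS prev v) (\<lambda>q. bind_pmf (ctx_pmf CONT v) (\<lambda>cc.
          map_pmf (Cons (v, q, cc)) (bind_pmf (?SV q) (\<lambda>qs. map_pmf (\<lambda>cs. zip vs (zip qs cs)) ?SR))))"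
    by (simp add: map_bind_pmf map_pmf_comp)
  also have "\<dots> = gen V c VALS CONT prev (v # vs)"
    by (simp add: Cons.IH)
  finally show ?case .
qed

lemma shot_gen: "shot_pmf V c VALS CONT vs = gen V c VALS CONT None vs"
  unfolding shot_pmf_def by (rule gen_eq)

definition str :: "('v \<times> int \<times> 'c list) list \<Rightarrow> ('v, 'c) tok list" where
  "str sh = join_with Cm (map block sh)"

lemma str_Nil[simp]: "str [] = []" by (simp add: str_def)

lemma str_Cons: "str ((v, q, cs) # r) = map Ctx cs @ Vx v # Eq # Val q # (if r = [] then [] else Cm # str r)"
  by (cases r) (simp_all add: str_def)

lemma set_gen:
  assumes "r \<in> set_pmf (gen V c VALS CONT prev vs)"
  shows "map fst r = vs \<and> (\<forall>(v, q, cs) \<in> set r. cs \<in> set_pmf (ctx_pmf CONT v))"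
  using assms
proof (induction vs arbitrary: prev r)
  case Nil
  then show ?case by simp
next
  case (Cons v vs)
  then show ?case by fastforce
qed

lemma ctx_take_eq:
  "take N (map Ctx cs @ Vx v # R) = map Ctx cs0 @ Vx v' # R0 \<longleftrightarrow>
     cs = cs0 \<and> v = v' \<and> length cs < N \<and> take (N - Suc (length cs)) R = R0"
proof (induction cs arbitrary: cs0 N)
  case Nil
  then show ?case by (cases cs0; cases N) auto
next
  case (Cons x cs)
  then show ?case by (cases cs0; cases N) auto
qed

lemma take_map_Ctx:
  assumes "N \<le> length cs0"
  shows "take N (map Ctx cs @ Vx v # R) = map Ctx (take N cs0) \<longleftrightarrow> take N cs = take N cs0"
proof
  assume h: "take N (map Ctx cs @ Vx v # R) = map Ctx (take N cs0)"
  show "take N cs = take N cs0"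
  proof (cases "N \<le> length cs")
    case True
    then have "take N (map Ctx cs @ Vx v # R) = map Ctx (take N cs)" by (simp add: take_map)
    then show ?thesis using h by (simp add: inj_map_eq_map inj_def)
  next
    case False
    then have "Vx v \<in> set (take N (map Ctx cs @ Vx v # R))" by (cases "N - length cs") (auto simp: take_append)
    moreover have "Vx v \<notin> set (map Ctx (take N cs0))" by auto
    ultimately show ?thesis using h by metis
  qed
next
  assume h: "take N cs = take N cs0"
  then have "N \<le> length cs" using assms
    by (metis length_take min.absorb2 min.cobounded1 min_def)
  then show "take N (map Ctx cs @ Vx v # R) = map Ctx (take N cs0)" using h by (metis take_map append_take_drop_id take_append diff_is_0_eq take0 append_Nil2 length_map)
qed



definition progW :: "'v set \<Rightarrow> ('v \<times> 'v \<Rightarrow> int) \<Rightarrow> ('v \<Rightarrow> int set) \<Rightarrow> ('v \<Rightarrow> 'c set)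
                      \<Rightarrow> ('v \<times> int) option \<Rightarrow> 'v list \<Rightarrow> ('v, 'c) tok list \<Rightarrow> ('v, 'c) tok pmf" where
  "progW V c VALS CONT prev vs w =
     (case rev w of
        [] \<Rightarrow> pmf_of_set (Ctx ` CONT (vs ! 0))
      | Cm # _ \<Rightarrow> pmf_of_set (Ctx ` CONT (vs ! length (verts w)))
      | Ctx x # _ \<Rightarrow>
          (let run = takeWhile is_ctx (rev w); vj = (THE v. x \<in> CONT v)
           in pmf_of_set ((Ctx ` CONT vj \<union> {Vx vj}) - set run))
      | Vx v # _ \<Rightarrow> return_pmf Eq
      | Eq # Vx vj # _ \<Rightarrow>
          (if vj \<notin> V then pmf_of_set (Val ` VALS vj)
           else (let pre = filter (\<lambda>(u, q). u \<in> V) (pairs w)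
                 in if pre = [] then (case prev of None \<Rightarrow> pmf_of_set (Val ` VALS vj)
                                      | Some (u, p) \<Rightarrow> return_pmf (Val (p + c (u, vj))))
                    else return_pmf (Val (snd (last pre) + c (fst (last pre), vj)))))
      | Val q # _ \<Rightarrow> return_pmf Cm
      | _ \<Rightarrow> return_pmf Dlm)"

lemma verts_map_Ctx[simp]: "verts (map Ctx cs @ r) = verts r"
  by (induction cs) auto

lemma pairs_map_Ctx[simp]: "pairs (map Ctx cs @ r) = pairs r"
proof (induction cs)
  case Nil
  then show ?case by simp
next
  case (Cons a cs)
  then show ?case by simp
qed

lemma pairs_block: "pairs (map Ctx cs @ Vx v # Eq # Val q # r) = (v, q) # pairs r"
  by simp

lemma progW_Nil: "progW V c VALS CONT prev vs [] = pmf_of_set (Ctx ` CONT (vs ! 0))"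
  by (simp add: progW_def)

lemma progW_Ctx_gen:
  assumes "rev w = Ctx x # r"
  shows "progW V c VALS CONT prev vs w = pmf_of_set ((Ctx ` CONT (THE v. x \<in> CONT v) \<union> {Vx (THE v. x \<in> CONT v)}) - set (takeWhile is_ctx (rev w)))"
  unfolding progW_def by (simp only: assms list.case tok.case Let_def)

lemma progW_ctx:
  assumes "0 < N" "N \<le> length cs0" "set cs0 \<subseteq> CONT v"
    and disj: "\<And>v w. v \<noteq> w \<Longrightarrow> CONT v \<inter> CONT w = {}"
  shows "progW V c VALS CONT prev vs (map Ctx (take N cs0))
       = pmf_of_set ((Ctx ` CONT v \<union> {Vx v}) - Ctx ` set (take N cs0))"
proof -
  define x where "x = cs0 ! (N - 1)"
  have tk: "take N cs0 = take (N - 1) cs0 @ [x]"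
    using assms(1,2) take_Suc_conv_app_nth[of "N - 1" cs0] by (simp add: x_def)
  have x: "rev (map Ctx (take N cs0)) = Ctx x # rev (map Ctx (take (N - 1) cs0))" "x = cs0 ! (N - 1)"
    by (simp_all add: tk x_def)
  have xv: "x \<in> CONT v" using assms x by (auto intro: nth_mem)
  have the: "(THE v. x \<in> CONT v) = v"
    using xv disj by (intro the_equality) auto
  have run: "takeWhile is_ctx (rev (map Ctx (take N cs0))) = rev (map Ctx (take N cs0))"
    by (simp add: takeWhile_eq_all_conv)
  show ?thesis unfolding progW_Ctx_gen[OF x(1)] run the by simp
qed

lemma progW_Cm_gen: "rev w = Cm # r \<Longrightarrow> progW V c VALS CONT prev vs w = pmf_of_set (Ctx ` CONT (vs ! length (verts w)))"
  unfolding progW_def by (simp only: list.case tok.case)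

lemma progW_Vx_gen: "rev w = Vx u # r \<Longrightarrow> progW V c VALS CONT prev vs w = return_pmf Eq"
  unfolding progW_def by (simp only: list.case tok.case)

lemma progW_Val_gen: "rev w = Val q # r \<Longrightarrow> progW V c VALS CONT prev vs w = return_pmf Cm"
  unfolding progW_def by (simp only: list.case tok.case)

lemma progW_Qu_gen: "rev w = Qu # r \<Longrightarrow> progW V c VALS CONT prev vs w = return_pmf Dlm"
  unfolding progW_def by (simp only: list.case tok.case)

lemma progW_Dlm_gen: "rev w = Dlm # r \<Longrightarrow> progW V c VALS CONT prev vs w = return_pmf Dlm"
  unfolding progW_def by (simp only: list.case tok.case)

lemma progW_Eq1_gen: "rev w = [Eq] \<Longrightarrow> progW V c VALS CONT prev vs w = return_pmf Dlm"
  unfolding progW_def by (simp only: list.case tok.case)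

lemma progW_Eq_other_gen: "rev w = Eq # y # r \<Longrightarrow> \<not> (\<exists>u. y = Vx u) \<Longrightarrow> progW V c VALS CONT prev vs w = return_pmf Dlm"
  unfolding progW_def by (cases y) (simp_all only: list.case tok.case, auto)

definition valQ :: "'v set \<Rightarrow> ('v \<times> 'v \<Rightarrow> int) \<Rightarrow> ('v \<Rightarrow> int set) \<Rightarrow> ('v \<times> int) option \<Rightarrow> ('v \<times> int) list \<Rightarrow> 'v \<Rightarrow> ('v, 'c) tok pmf" where
  "valQ V c VALS prev ps vj =
          (if vj \<notin> V then pmf_of_set (Val ` VALS vj)
           else (let pre = filter (\<lambda>(u, q). u \<in> V) ps
                 in if pre = [] then (case prev of None \<Rightarrow> pmf_of_set (Val ` VALS vj)
                                      | Some (u, p) \<Rightarrow> return_pmf (Val (p + c (u, vj))))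
                    else return_pmf (Val (snd (last pre) + c (fst (last pre), vj)))))"

lemma progW_EqVx_gen: "rev w = Eq # Vx vj # r \<Longrightarrow> progW V c VALS CONT prev vs w = valQ V c VALS prev (pairs w) vj"
  unfolding progW_def valQ_def by (simp only: list.case tok.case)

lemma valQ_shift: "valQ V c VALS prev ((v, q) # ps) vj = valQ V c VALS (upd V prev v q) ps vj"
  unfolding valQ_def upd_def by (auto simp: Let_def)

lemma takeWhile_nonP: "\<not> P y \<Longrightarrow> takeWhile P (xs @ y # ys) = takeWhile P xs"
  by (induction xs) auto

lemma progW_shift:
  "progW V c VALS CONT prev (v # vs) (map Ctx cs @ Vx v # Eq # Val q # Cm # w)
   = progW V c VALS CONT (upd V prev v q) vs w"
proof -
  let ?W = "map Ctx cs @ Vx v # Eq # Val q # Cm # w"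
  have rW: "rev ?W = rev w @ [Cm, Val q, Eq, Vx v] @ rev (map Ctx cs)" by simp
  have vW: "verts ?W = v # verts w" by simp
  have pW: "pairs ?W = (v, q) # pairs w" by simp
  show ?thesis
  proof (cases "rev w")
    case Nil
    then have "w = []" by simp
    then show ?thesis using progW_Cm_gen[of ?W] by (simp add: progW_Nil)
  next
    case (Cons y r)
    then have rW': "rev ?W = y # (r @ [Cm, Val q, Eq, Vx v] @ rev (map Ctx cs))" by (simp add: rW)
    show ?thesis
    proof (cases y)
      case (Vx u)
      then show ?thesis using rW' Cons by (simp add: progW_Vx_gen)
    next
      case (Val x)
      then show ?thesis using rW' Cons by (simp add: progW_Val_gen)
    next
      case (Ctx x)
      have "takeWhile is_ctx (rev ?W) = takeWhile is_ctx (rev w)"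
        unfolding rW by (simp add: takeWhile_nonP)
      then show ?thesis using rW' Cons Ctx by (simp add: progW_Ctx_gen)
    next
      case Eq
      show ?thesis
      proof (cases r)
        case Nil
        then show ?thesis using rW' Cons Eq by (simp add: progW_Eq1_gen progW_Eq_other_gen)
      next
        case (Cons y2 r2)
        note C2 = Cons
        show ?thesis
        proof (cases "\<exists>u. y2 = Vx u")
          case True
          then obtain u where "y2 = Vx u" by blast
          then show ?thesis using rW' \<open>rev w = y # r\<close> Eq C2 pW
            by (simp add: progW_EqVx_gen valQ_shift)
        next
          case False
          then show ?thesis using rW' \<open>rev w = y # r\<close> Eq C2
            by (simp add: progW_Eq_other_gen)
        qed
      qed
    next
      case Cm
      then show ?thesis using rW' Cons vW by (simp add: progW_Cm_gen)
    next
      case Qu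
      then show ?thesis using rW' Cons by (simp add: progW_Qu_gen)
    next
      case Dlm
      then show ?thesis using rW' Cons by (simp add: progW_Dlm_gen)
    qed
  qed
qed

lemma progW_P3: "progW V c VALS CONT prev vs (map Ctx cs @ [Vx v]) = return_pmf Eq"
  by (rule progW_Vx_gen) simp

lemma progW_P5: "progW V c VALS CONT prev vs (map Ctx cs @ [Vx v, Eq, Val q]) = return_pmf Cm"
  by (rule progW_Val_gen) simp

lemma progW_P4:
  assumes "finite (VALS v)" "VALS v \<noteq> {}"
  shows "progW V c VALS CONT prev vs (map Ctx cs @ [Vx v, Eq]) = map_pmf Val (vstep V c VALS prev v)"
proof -
  have "progW V c VALS CONT prev vs (map Ctx cs @ [Vx v, Eq]) = valQ V c VALS prev [] v"
    by (subst progW_EqVx_gen[where r="rev (map Ctx cs)"]) simp_all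
  also have "\<dots> = map_pmf Val (vstep V c VALS prev v)"
    using assms by (auto simp: valQ_def vstep_def map_pmf_of_set_inj inj_on_def split: option.splits)
  finally show ?thesis .
qed



lemma measure_bind_indep:
  assumes "\<And>x \<omega>. x \<in> set_pmf C \<Longrightarrow> \<omega> \<in> set_pmf (K x) \<Longrightarrow> E \<omega> = P x"
  shows "measure_pmf.prob (bind_pmf C K) {\<omega>. E \<omega>} = measure_pmf.prob C {x. P x}"
proof -
  have 2: "measure_pmf.prob (K x) {\<omega>. E \<omega>} = indicator {x. P x} x"
    if "x \<in> set_pmf C" for x
  proof (cases "P x")
    case True
    then have "measure_pmf.prob (K x) {\<omega>. E \<omega>} = measure_pmf.prob (K x) UNIV"
      by (intro measure_cong_set_pmf) (use assms that in auto)
    then show ?thesis using True by simp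
  next
    case False
    then show ?thesis using assms that by (auto simp: measure_pmf_zero_iff)
  qed
  have "measure_pmf.prob (bind_pmf C K) {\<omega>. E \<omega>} = (\<integral>x. indicator {x. P x} x \<partial>C)"
    unfolding measure_bind_pmf' by (rule integral_cong_AE) (auto simp: AE_measure_pmf_iff 2)
  then show ?thesis by simp
qed

lemma set_gen_Cons:
  "r \<in> set_pmf (gen V c VALS CONT prev (v # vs)) \<longleftrightarrow>
   (\<exists>q cs r'. r = (v, q, cs) # r' \<and> q \<in> set_pmf (vstep V c VALS prev v) \<and> cs \<in> set_pmf (ctx_pmf CONT v)
      \<and> r' \<in> set_pmf (gen V c VALS CONT (upd V prev v q) vs))"
  by auto

lemma take_Eq_Val_Cm: "take (Suc (Suc (Suc n))) (a # b # d # X) = a # b # d # take n X"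
  by simp

lemma take4[simp]: "take (4 + n) (a # b # d # e # X) = a # b # d # e # take n X"
  by (simp add: numeral_eq_Suc)

lemma take3[simp]: "take (3 + n) (a # b # d # X) = a # b # d # take n X"
  by (simp add: numeral_eq_Suc)

lemma nth4[simp]: "(a # b # d # e # X) ! (4 + n) = X ! n"
  by (simp add: numeral_eq_Suc)

lemma shot_CP:
  fixes V :: "'v set" and CONT :: "'v \<Rightarrow> 'c set"
  assumes VALS: "\<And>v. finite (VALS v) \<and> VALS v \<noteq> {}"
    and CONT: "\<And>v. finite (CONT v) \<and> CONT v \<noteq> {}"
    and disj: "\<And>v w. v \<noteq> w \<Longrightarrow> CONT v \<inter> CONT w = {}"
  shows "r0 \<in> set_pmf (gen V c VALS CONT prev vs) \<Longrightarrow> N < length (str r0) \<Longrightarrow>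
    CP (gen V c VALS CONT prev vs) (\<lambda>r. take N (str r) = take N (str r0)) (\<lambda>r. str r ! N)
       (progW V c VALS CONT prev vs (take N (str r0)))
    \<and> (\<forall>r \<in> set_pmf (gen V c VALS CONT prev vs). take N (str r) = take N (str r0) \<longrightarrow> N < length (str r))"
proof (induction vs arbitrary: prev r0 N)
  case Nil
  then show ?case by simp
next
  case (Cons v vs)
  obtain q0 cs0 r0' where r0: "r0 = (v, q0, cs0) # r0'" "q0 \<in> set_pmf (vstep V c VALS prev v)"
    "cs0 \<in> set_pmf (ctx_pmf CONT v)" "r0' \<in> set_pmf (gen V c VALS CONT (upd V prev v q0) vs)"
    using Cons.prems(1) unfolding set_gen_Cons by blast
  define T where "T r' = (if r' = [] then [] else Cm # str r')" for r' :: "('v \<times> int \<times> 'c list) list"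
  have strC: "str ((v, q, cs) # r') = map Ctx cs @ Vx v # Eq # Val q # T r'" for q cs r'
    by (simp add: str_Cons T_def)
  define L0 where "L0 = length cs0"
  let ?G = "gen V c VALS CONT prev (v # vs)"
  have Gdef: "?G = bind_pmf (vstep V c VALS prev v) (\<lambda>q. bind_pmf (ctx_pmf CONT v) (\<lambda>cs.
      map_pmf (Cons (v, q, cs)) (gen V c VALS CONT (upd V prev v q) vs)))" by simp
  have NL: "N < L0 + 3 + length (T r0')" using Cons.prems(2) r0(1) strC by (simp add: L0_def)
  have rne: "r' \<noteq> []" if "r' \<in> set_pmf (gen V c VALS CONT p' vs)" "N \<ge> L0 + 3" for r' p'
  proof -
    have "T r0' \<noteq> []" using NL that(2) by auto
    then have "r0' \<noteq> []" by (auto simp: T_def)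
    then have "vs \<noteq> []" using set_gen[OF r0(4)] by auto
    then show ?thesis using set_gen[OF that(1)] by auto
  qed
  have cs0C: "set cs0 \<subseteq> CONT v" using r0(3) set_ctx_pmf[of CONT v] CONT by (auto simp: DL_def)
  show ?case
  proof (cases "N \<le> L0")
    case True
    have w: "take N (str r0) = map Ctx (take N cs0)"
      using True r0(1) strC by (simp add: L0_def take_map)
    have Eiff: "take N (str ((v, q, cs) # r')) = take N (str r0) \<longleftrightarrow> take N cs = take N cs0" for q cs r'
      unfolding w strC using take_map_Ctx[of N cs0] True by (simp add: L0_def)
    have Nle: "N \<le> length cs" if "take N cs = take N cs0" for cs :: "'c list"
      using that True unfolding L0_def by (metis length_take min.absorb2 min.cobounded1 min_def)
    have gval: "str ((v, q, cs) # r') ! N = (if N < length cs then Ctx (cs ! N) else Vx v)"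
      if "N \<le> length cs" for q and cs :: "'c list" and r'
      using that by (simp add: strC nth_append)
    have Q: "progW V c VALS CONT prev (v # vs) (take N (str r0)) =
      (if N = 0 then pmf_of_set (Ctx ` CONT v) else pmf_of_set ((Ctx ` CONT v \<union> {Vx v}) - Ctx ` set (take N cs0)))"
      unfolding w using progW_ctx[of N cs0 CONT v V c VALS prev "v # vs", OF _ True[unfolded L0_def] cs0C disj] by (auto simp: progW_Nil)
    have "CP ?G (\<lambda>r. take N (str r) = take N (str r0)) (\<lambda>r. str r ! N) (progW V c VALS CONT prev (v # vs) (take N (str r0)))"
      unfolding Gdef Q
    proof (rule CP_bind, rule CP_bind_gen[where E'="\<lambda>cs. take N cs = take N cs0" and g'="\<lambda>cs. if N < length cs then Ctx (cs ! N) else Vx v"])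
      fix q cs \<omega>
      assume "\<omega> \<in> set_pmf (map_pmf (Cons (v, q, cs)) (gen V c VALS CONT (upd V prev v q) vs))"
      then obtain r' where "\<omega> = (v, q, cs) # r'" by auto
      then show "(take N (str \<omega>) = take N (str r0)) = (take N cs = take N cs0)"
        and "take N cs = take N cs0 \<Longrightarrow> str \<omega> ! N = (if N < length cs then Ctx (cs ! N) else Vx v)"
        using Eiff gval Nle by auto
    next
      show "CP (ctx_pmf CONT v) (\<lambda>cs. take N cs = take N cs0) (\<lambda>cs. if N < length cs then Ctx (cs ! N) else Vx v)
         (if N = 0 then pmf_of_set (Ctx ` CONT v) else pmf_of_set ((Ctx ` CONT v \<union> {Vx v}) - Ctx ` set (take N cs0)))"
        using CP_ctx[of CONT v cs0 N] CONT r0(3) True by (simp add: L0_def)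
    qed
    moreover have "N < length (str r)" if rin: "r \<in> set_pmf ?G" "take N (str r) = take N (str r0)" for r
    proof -
      obtain q cs r' where "r = (v, q, cs) # r'" using rin(1) unfolding set_gen_Cons by blast
      then show ?thesis using rin(2) Eiff Nle strC by fastforce
    qed
    ultimately show ?thesis by blast
  next
    case False
    note N1 = False
    show ?thesis
    proof (cases "N = L0 + 1")
      case True
      have w: "take N (str r0) = map Ctx cs0 @ Vx v # []"
        using True r0(1) strC by (simp add: L0_def)
      have Eiff: "take N (str ((v, q, cs) # r')) = take N (str r0) \<longleftrightarrow> cs = cs0" for q cs r'
        unfolding w strC ctx_take_eq using True by (auto simp: L0_def)
      have "CP ?G (\<lambda>r. take N (str r) = take N (str r0)) (\<lambda>r. str r ! N) (return_pmf Eq)"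
        by (rule CP_det) (use Eiff strC True in \<open>auto simp: set_gen_Cons L0_def nth_append\<close>)
      moreover have "N < length (str r)" if rin: "r \<in> set_pmf ?G" "take N (str r) = take N (str r0)" for r
      proof -
        obtain q cs r' where "r = (v, q, cs) # r'" using rin(1) unfolding set_gen_Cons by blast
        then show ?thesis using rin(2) Eiff strC True by (auto simp: L0_def)
      qed
      ultimately show ?thesis unfolding w using progW_P3[of V c VALS CONT prev "v # vs" cs0 v] by simp
    next
      case False
      note N2 = False
      show ?thesis
      proof (cases "N = L0 + 2")
        case True
        have w: "take N (str r0) = map Ctx cs0 @ Vx v # [Eq]"
          using True r0(1) strC by (simp add: L0_def)
        have Eiff: "take N (str ((v, q, cs) # r')) = take N (str r0) \<longleftrightarrow> cs = cs0" for q cs r'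
          unfolding w strC ctx_take_eq using True by (auto simp: L0_def)
        have "CP ?G (\<lambda>r. take N (str r) = take N (str r0)) (\<lambda>r. str r ! N) (map_pmf Val (vstep V c VALS prev v))"
          unfolding Gdef
        proof (rule CP_indep)
          fix q
          show "measure_pmf.prob (bind_pmf (ctx_pmf CONT v) (\<lambda>cs. map_pmf (Cons (v, q, cs)) (gen V c VALS CONT (upd V prev v q) vs)))
                  {x. take N (str x) = take N (str r0)} = measure_pmf.prob (ctx_pmf CONT v) {cs. cs = cs0}"
            by (rule measure_bind_indep) (auto simp: Eiff)
        next
          fix q x
          assume "x \<in> set_pmf (bind_pmf (ctx_pmf CONT v) (\<lambda>cs. map_pmf (Cons (v, q, cs)) (gen V c VALS CONT (upd V prev v q) vs)))"
            "take N (str x) = take N (str r0)"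
          then show "str x ! N = Val q" using Eiff strC True by (auto simp: L0_def nth_append)
        qed
        moreover have "N < length (str r)" if rin: "r \<in> set_pmf ?G" "take N (str r) = take N (str r0)" for r
        proof -
          obtain q cs r' where "r = (v, q, cs) # r'" using rin(1) unfolding set_gen_Cons by blast
          then show ?thesis using rin(2) Eiff strC True by (auto simp: L0_def)
        qed
        ultimately show ?thesis unfolding w using progW_P4[of VALS v V c CONT prev "v # vs" cs0] VALS by simp
      next
        case False
        note N3 = False
        show ?thesis
        proof (cases "N = L0 + 3")
          case True
          have w: "take N (str r0) = map Ctx cs0 @ Vx v # [Eq, Val q0]"
            using True r0(1) strC by (simp add: L0_def)
          have Eiff: "take N (str ((v, q, cs) # r')) = take N (str r0) \<longleftrightarrow> cs = cs0 \<and> q = q0" for q cs r'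
            unfolding w strC ctx_take_eq using True by (auto simp: L0_def)
          have "CP ?G (\<lambda>r. take N (str r) = take N (str r0)) (\<lambda>r. str r ! N) (return_pmf Cm)"
          proof (rule CP_det)
            fix r assume rG: "r \<in> set_pmf ?G" and rE: "take N (str r) = take N (str r0)"
            obtain q cs r' where r: "r = (v, q, cs) # r'"
              and r'G: "r' \<in> set_pmf (gen V c VALS CONT (upd V prev v q) vs)"
              using rG unfolding set_gen_Cons by blast
            have "cs = cs0" using Eiff[of q cs r'] rE r by simp
            have "r' \<noteq> []" using rne[OF r'G] True by simp
            then show "str r ! N = Cm" using r True strC \<open>cs = cs0\<close> by (simp add: L0_def nth_append T_def)
          qed
          moreover have "N < length (str r)" if rin: "r \<in> set_pmf ?G" "take N (str r) = take N (str r0)" for r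
          proof -
            obtain q cs r' where r: "r = (v, q, cs) # r'"
              and r'G: "r' \<in> set_pmf (gen V c VALS CONT (upd V prev v q) vs)"
              using rin(1) unfolding set_gen_Cons by blast
            have "cs = cs0" using Eiff[of q cs r'] rin(2) r by simp
            have "r' \<noteq> []" using rne[OF r'G] True by simp
            then show ?thesis using r True strC \<open>cs = cs0\<close> by (simp add: L0_def T_def)
          qed
          ultimately show ?thesis unfolding w using progW_P5[of V c VALS CONT prev "v # vs" cs0 v q0] by simp
        next
          case False
          define N' where "N' = N - (L0 + 4)"
          have N': "N = L0 + 4 + N'" using N1 N2 N3 False unfolding N'_def by linarith
          have r0ne: "r0' \<noteq> []" using rne[OF r0(4)] N' by simp
          have w: "take N (str r0) = map Ctx cs0 @ Vx v # Eq # Val q0 # Cm # take N' (str r0')"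
            using N' r0(1) strC r0ne by (simp add: L0_def T_def)
          have Eiff: "take N (str ((v, q, cs) # r')) = take N (str r0) \<longleftrightarrow>
               cs = cs0 \<and> q = q0 \<and> take N' (str r') = take N' (str r0')" if "r' \<noteq> []" for q cs r'
            unfolding w strC ctx_take_eq using N' that by (auto simp: L0_def T_def)
          have gN: "str ((v, q, cs0) # r') ! N = str r' ! N'" if "r' \<noteq> []" for q r'
            using N' that strC by (simp add: L0_def T_def nth_append)
          have IH: "CP (gen V c VALS CONT (upd V prev v q0) vs) (\<lambda>r. take N' (str r) = take N' (str r0')) (\<lambda>r. str r ! N')
               (progW V c VALS CONT (upd V prev v q0) vs (take N' (str r0')))
            \<and> (\<forall>r \<in> set_pmf (gen V c VALS CONT (upd V prev v q0) vs). take N' (str r) = take N' (str r0') \<longrightarrow> N' < length (str r))"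
            using Cons.IH[OF r0(4)] Cons.prems(2) r0(1) strC N' r0ne by (simp add: L0_def T_def)
          have Q: "progW V c VALS CONT prev (v # vs) (take N (str r0)) = progW V c VALS CONT (upd V prev v q0) vs (take N' (str r0'))"
            unfolding w by (rule progW_shift)
          have "CP ?G (\<lambda>r. take N (str r) = take N (str r0)) (\<lambda>r. str r ! N) (progW V c VALS CONT (upd V prev v q0) vs (take N' (str r0')))"
            unfolding Gdef
          proof (rule CP_bind, rule CP_bind)
            fix q cs
            assume q: "q \<in> set_pmf (vstep V c VALS prev v)" and cs: "cs \<in> set_pmf (ctx_pmf CONT v)"
            show "CP (map_pmf (Cons (v, q, cs)) (gen V c VALS CONT (upd V prev v q) vs))
                (\<lambda>r. take N (str r) = take N (str r0)) (\<lambda>r. str r ! N) (progW V c VALS CONT (upd V prev v q0) vs (take N' (str r0')))"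
            proof (cases "q = q0 \<and> cs = cs0")
              case True
              then have qq: "q = q0" and cc: "cs = cs0" by auto
              have "CP (gen V c VALS CONT (upd V prev v q) vs)
                  (\<lambda>r'. take N (str ((v, q, cs) # r')) = take N (str r0)) (\<lambda>r'. str ((v, q, cs) # r') ! N)
                  (progW V c VALS CONT (upd V prev v q0) vs (take N' (str r0')))
                \<longleftrightarrow> CP (gen V c VALS CONT (upd V prev v q) vs) (\<lambda>r. take N' (str r) = take N' (str r0')) (\<lambda>r. str r ! N')
                  (progW V c VALS CONT (upd V prev v q0) vs (take N' (str r0')))"
              proof (rule CP_cong)
                fix r' assume r'G: "r' \<in> set_pmf (gen V c VALS CONT (upd V prev v q) vs)"
                have ne: "r' \<noteq> []" using rne[OF r'G] N' by simp
                show "(take N (str ((v, q, cs) # r')) = take N (str r0)) = (take N' (str r') = take N' (str r0'))"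
                  and "str ((v, q, cs) # r') ! N = str r' ! N'"
                  using Eiff[OF ne] gN[OF ne] qq cc by simp_all
              qed
              then show ?thesis unfolding CP_map using IH qq by simp
            next
              case False
              show ?thesis
              proof (rule CP_empty)
                fix r assume "r \<in> set_pmf (map_pmf (Cons (v, q, cs)) (gen V c VALS CONT (upd V prev v q) vs))"
                then obtain r' where r: "r = (v, q, cs) # r'" and r'G: "r' \<in> set_pmf (gen V c VALS CONT (upd V prev v q) vs)"
                  by auto
                have ne: "r' \<noteq> []" using rne[OF r'G] N' by simp
                show "\<not> take N (str r) = take N (str r0)" using Eiff[OF ne] False r by simp
              qed
            qed
          qed
          moreover have "N < length (str r)" if rin: "r \<in> set_pmf ?G" "take N (str r) = take N (str r0)" for r
          proof -
            obtain q cs r' where r: "r = (v, q, cs) # r'"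
              and r'G: "r' \<in> set_pmf (gen V c VALS CONT (upd V prev v q) vs)"
              using rin(1) unfolding set_gen_Cons by blast
            have r'ne: "r' \<noteq> []" using rne[OF r'G] N' by simp
            have eqs: "cs = cs0 \<and> q = q0 \<and> take N' (str r') = take N' (str r0')"
              using Eiff[OF r'ne] rin(2) r by simp
            then have "N' < length (str r')" using IH r'G by auto
            then show ?thesis using r r'ne N' strC eqs by (simp add: L0_def T_def)
          qed
          ultimately show ?thesis using Q by simp
        qed
      qed
    qed
  qed
qed



lemma seq_pmf_snoc: "seq_pmf (ps @ [p]) = bind_pmf (seq_pmf ps) (\<lambda>a. map_pmf (\<lambda>b. a @ [b]) p)"
proof (induction ps)
  case Nil
  then show ?case by (simp add: bind_return_pmf map_pmf_def)
next
  case (Cons q ps)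
  then show ?case by (simp add: bind_assoc_pmf map_bind_pmf bind_map_pmf map_pmf_comp)
qed

lemma set_seq_pmf: "xs \<in> set_pmf (seq_pmf ps) \<Longrightarrow> list_all2 (\<lambda>x p. x \<in> set_pmf p) xs ps"
proof (induction ps arbitrary: xs)
  case Nil
  then show ?case by simp
next
  case (Cons p ps)
  then show ?case by auto
qed

lemma Dlm_block: "Dlm \<notin> set (block b)"
  by (cases b) auto

lemma Dlm_str: "Dlm \<notin> set (str sh)"
proof (induction sh)
  case Nil
  then show ?case by simp
next
  case (Cons b sh)
  then show ?case by (cases b) (auto simp: str_Cons)
qed

lemma Cm_block: "Cm \<notin> set (block b)"
  by (cases b) auto

lemma proc_shot_str: "proc_shot sh = [Vx (fst (last sh)), Eq, Qu] @ str sh"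
  by (simp add: proc_shot_def str_def)

lemma Dlm_proc_shot: "Dlm \<notin> set (proc_shot sh)"
  using Dlm_str by (simp add: proc_shot_str)

lemma join_with_app: "L \<noteq> [] \<Longrightarrow> join_with d L @ d # X = concat (map (\<lambda>u. u @ [d]) L) @ X"
proof (induction d L rule: join_with.induct)
  case (1 s)
  then show ?case by simp
next
  case (2 s x)
  then show ?case by simp
next
  case (3 s x y r)
  then show ?case by simp
qed

lemma sep_eq: "d \<notin> set u \<Longrightarrow> d \<notin> set u0 \<Longrightarrow> u @ d # R = u0 @ d # R0 \<longleftrightarrow> u = u0 \<and> R = R0"
proof (induction u arbitrary: u0)
  case Nil
  then show ?case by (cases u0) auto
next
  case (Cons a u)
  then show ?case by (cases u0) auto
qed

lemma concat_sep_eq: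
  assumes "length L = length L0" "\<forall>u\<in>set L. d \<notin> set u" "\<forall>u\<in>set L0. d \<notin> set u"
  shows "concat (map (\<lambda>u. u @ [d]) L) @ X = concat (map (\<lambda>u. u @ [d]) L0) @ X0 \<longleftrightarrow> L = L0 \<and> X = X0"
  using assms
proof (induction L arbitrary: L0)
  case Nil
  then show ?case by simp
next
  case (Cons u L)
  then obtain u0 L0' where "L0 = u0 # L0'" by (cases L0) auto
  then show ?case using Cons sep_eq[of d u u0] by auto
qed

lemma join_sep_eq:
  assumes "length L = length L0" "L \<noteq> []" "\<forall>u\<in>set L. d \<notin> set u" "\<forall>u\<in>set L0. d \<notin> set u"
  shows "join_with d L @ d # X = join_with d L0 @ d # X0 \<longleftrightarrow> L = L0 \<and> X = X0"
proof -
  have "L0 \<noteq> []" using assms by auto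
  then show ?thesis using assms by (simp add: join_with_app concat_sep_eq)
qed

lemma verts_str: "verts (str sh) = map fst sh"
proof (induction sh)
  case Nil
  then show ?case by simp
next
  case (Cons b sh)
  then show ?case by (cases b) (simp add: str_Cons)
qed

lemma verts_proc_shot: "verts (drop 3 (proc_shot sh)) = map fst sh"
  by (simp add: proc_shot_str verts_str)

lemma takeWhile_join:
  assumes "L \<noteq> []" "\<forall>u\<in>set L. d \<notin> set u"
  shows "takeWhile (\<lambda>x. x \<noteq> d) (join_with d L @ d # X) = hd L"
proof -
  obtain u L' where "L = u # L'" using assms by (cases L) auto
  then show ?thesis using assms by (auto simp: join_with_app takeWhile_append2 takeWhile_tail)
qed



definition pick :: "'v set \<Rightarrow> ('v \<times> 'v \<Rightarrow> int) \<Rightarrow> ('v \<Rightarrow> int set) \<Rightarrow> ('v \<Rightarrow> 'c set)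
   \<Rightarrow> ('v \<times> int) option \<Rightarrow> 'v list \<Rightarrow> nat \<Rightarrow> ('v, 'c) tok list \<Rightarrow> ('v \<times> int) list
   \<Rightarrow> ('v, 'c) tok \<Rightarrow> ('v, 'c) tok \<Rightarrow> ('v, 'c) tok pmf" where
  "pick V c VALS CONT prev vsl i run ps y1 y2 =
    (case y1 of
       Cm \<Rightarrow> pmf_of_set (Ctx ` CONT (vsl ! i))
     | Ctx x \<Rightarrow> pmf_of_set ((Ctx ` CONT (THE v. x \<in> CONT v) \<union> {Vx (THE v. x \<in> CONT v)}) - set run)
     | Vx _ \<Rightarrow> return_pmf Eq
     | Eq \<Rightarrow> (case y2 of Vx vj \<Rightarrow> valQ V c VALS prev ps vj | _ \<Rightarrow> return_pmf Dlm)
     | Val _ \<Rightarrow> return_pmf Cm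
     | _ \<Rightarrow> return_pmf Dlm)"

lemma progW_pick:
  assumes "rev w = y1 # y2 # rr"
  shows "progW V c VALS CONT prev vs w = pick V c VALS CONT prev vs (length (verts w)) (takeWhile is_ctx (rev w)) (pairs w) y1 y2"
proof (cases y1)
  case (Ctx x)
  then show ?thesis using assms by (simp add: progW_Ctx_gen pick_def)
next
  case (Vx u)
  then show ?thesis using assms by (simp add: progW_Vx_gen pick_def)
next
  case (Val q)
  then show ?thesis using assms by (simp add: progW_Val_gen pick_def)
next
  case Eq
  show ?thesis
  proof (cases "\<exists>u. y2 = Vx u")
    case True
    then show ?thesis using assms Eq by (auto simp: progW_EqVx_gen pick_def)
  next
    case False
    then show ?thesis using assms Eq by (cases y2) (auto simp: progW_Eq_other_gen pick_def)
  qed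
next
  case Cm
  then show ?thesis using assms by (simp add: progW_Cm_gen pick_def)
next
  case Qu
  then show ?thesis using assms by (simp add: progW_Qu_gen pick_def)
next
  case Dlm
  then show ?thesis using assms by (simp add: progW_Dlm_gen pick_def)
qed

lemma P_prog_pick:
  assumes "rev z = y1 # y2 # rr"
  shows "P_prog V c VALS CONT z = pick V c VALS CONT None (verts (drop 3 (prev_shot z)))
     (length (verts (drop 3 (cur_seq z)))) (takeWhile is_ctx (rev z)) (pairs (drop 3 (cur_seq z))) y1 y2"
proof (cases y1)
  case (Ctx x)
  then show ?thesis unfolding P_prog_def pick_def by (simp only: assms list.case tok.case Let_def)
next
  case (Vx u)
  then show ?thesis unfolding P_prog_def pick_def by (simp only: assms list.case tok.case)
next
  case (Val q)
  then show ?thesis unfolding P_prog_def pick_def by (simp only: assms list.case tok.case)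
next
  case Eq
  show ?thesis
  proof (cases y2)
    case (Vx vj)
    then show ?thesis unfolding P_prog_def pick_def valQ_def using Eq
      by (simp only: assms list.case tok.case Let_def option.case)
  qed (use Eq in \<open>simp_all only: P_prog_def pick_def assms list.case tok.case\<close>)
next
  case Cm
  then show ?thesis unfolding P_prog_def pick_def by (simp only: assms list.case tok.case Let_def)
next
  case Qu
  then show ?thesis unfolding P_prog_def pick_def by (simp only: assms list.case tok.case)
next
  case Dlm
  then show ?thesis unfolding P_prog_def pick_def by (simp only: assms list.case tok.case)
qed

lemma len2: "length xs \<ge> 2 \<Longrightarrow> \<exists>a b r. xs = a # b # r"
proof (cases xs)
  case (Cons a r)
  assume "length xs \<ge> 2"
  then show ?thesis using Cons by (cases r) auto
qed simp

lemma P_prog_hdr: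
  assumes z: "z = P @ Dlm # [Vx L, Eq, Qu] @ bw"
    and bw: "bw = block b @ Cm # w" and Dw: "Dlm \<notin> set w"
    and ps: "verts (drop 3 (takeWhile (\<lambda>x. x \<noteq> Dlm) z)) = vs"
  shows "P_prog V c VALS CONT z = progW V c VALS CONT None vs bw"
proof -
  have DB: "Dlm \<notin> set bw" using bw Dlm_block[of b] Dw by auto
  have "length bw \<ge> 2" using bw by (cases b) auto
  then obtain y1 y2 rr where r: "rev bw = y1 # y2 # rr"
    using len2[of "rev bw"] by auto
  have rz: "rev z = y1 # y2 # (rr @ [Qu, Eq, Vx L, Dlm] @ rev P)" using z r by simp
  have "takeWhile (\<lambda>x. x \<noteq> Dlm) (rev z) = rev bw @ [Qu, Eq, Vx L]"
  proof -
    have "rev z = rev bw @ [Qu, Eq, Vx L, Dlm] @ rev P" using z by simp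
    moreover have "takeWhile (\<lambda>x. x \<noteq> Dlm) (rev bw @ [Qu, Eq, Vx L, Dlm] @ rev P) = rev bw @ takeWhile (\<lambda>x. x \<noteq> Dlm) ([Qu, Eq, Vx L, Dlm] @ rev P)"
      by (rule takeWhile_append2) (use DB in auto)
    ultimately show ?thesis by simp
  qed
  then have cs: "drop 3 (cur_seq z) = bw" by (simp add: cur_seq_def)
  have rbw: "rev bw = rev w @ Cm # rev (block b)" using bw by simp
  have tw: "takeWhile is_ctx (rev z) = takeWhile is_ctx (rev bw)"
    using z rbw by (simp add: takeWhile_nonP)
  show ?thesis
    unfolding P_prog_pick[OF rz] progW_pick[OF r] cs tw ps[unfolded prev_shot_def[symmetric]] ..
qed



lemma inp_lab_snoc:
  assumes "length a = k"
  shows "inp_lab k (a @ [b]) = (join_with Dlm (map proc_shot a) @ [Dlm] @ [Vx (fst (last b)), Eq, Qu] @ block (hd b) @ [Cm], str (tl b))"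
  using assms by (simp add: inp_lab_def str_def Let_def nth_append)

lemma D_train_alt:
  "D_train V c VALS CONT \<sigma> k = bind_pmf \<sigma> (\<lambda>vs. bind_pmf (seq_pmf (replicate k (gen V c VALS CONT None vs)))
      (\<lambda>a. map_pmf (\<lambda>b. inp_lab k (a @ [b])) (gen V c VALS CONT None vs)))"
proof -
  have r: "replicate (Suc k) p = replicate k p @ [p]" for p :: "'x pmf" by (simp add: replicate_append_same)
  show ?thesis unfolding D_train_def shot_gen r seq_pmf_snoc by (simp add: map_bind_pmf map_pmf_comp)
qed

lemma seq_rep_support:
  assumes "a \<in> set_pmf (seq_pmf (replicate k p))"
  shows "length a = k \<and> (\<forall>x\<in>set a. x \<in> set_pmf p)"
  using set_seq_pmf[OF assms] by (auto simp: list_all2_conv_all_nth in_set_conv_nth)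

lemma ctx_app_eq: "map Ctx cs @ Vx v # R = map Ctx cs' @ Vx v' # R' \<longleftrightarrow> cs = cs' \<and> v = v' \<and> R = R'"
proof (induction cs arbitrary: cs')
  case Nil
  then show ?case by (cases cs') auto
next
  case (Cons x cs)
  then show ?case by (cases cs') auto
qed

lemma part1:
  fixes V :: "'v set" and CONT :: "'v \<Rightarrow> 'c set" and c :: "'v \<times> 'v \<Rightarrow> int"
  assumes VALS: "\<And>v. finite (VALS v) \<and> VALS v \<noteq> {}"
    and CONT: "\<And>v. finite (CONT v) \<and> CONT v \<noteq> {}"
    and disj: "\<And>v w. v \<noteq> w \<Longrightarrow> CONT v \<inter> CONT w = {}"
    and k: "1 \<le> k"
    and x0: "(inp, lab) \<in> set_pmf (D_train V c VALS CONT \<sigma> k)"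
    and t: "t < length lab"
  shows "P_prog V c VALS CONT (inp @ take t lab) = P_train (D_train V c VALS CONT \<sigma> k) t (inp @ take t lab)
     \<and> (\<forall>x \<in> set_pmf (D_train V c VALS CONT \<sigma> k). fst x @ take t (snd x) = inp @ take t lab \<longrightarrow> t < length (snd x))"
proof -
  define S where "S vs = gen V c VALS CONT None vs" for vs
  define D where "D = D_train V c VALS CONT \<sigma> k"
  define z where "z = inp @ take t lab"
  define J where "J a = join_with Dlm (map proc_shot a)" for a :: "('v \<times> int \<times> 'c list) list list"
  define X where "X b = [Vx (fst (last b)), Eq, Qu] @ block (hd b) @ Cm # take t (str (tl b))" for b :: "('v \<times> int \<times> 'c list) list"
  have Dalt: "D = bind_pmf \<sigma> (\<lambda>vs. bind_pmf (seq_pmf (replicate k (S vs))) (\<lambda>a. map_pmf (\<lambda>b. inp_lab k (a @ [b])) (S vs)))"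
    unfolding D_def S_def by (rule D_train_alt)
  have pre: "fst (inp_lab k (a @ [b])) @ take t (snd (inp_lab k (a @ [b]))) = J a @ Dlm # X b"
    and nxt: "snd (inp_lab k (a @ [b])) ! t = str (tl b) ! t"
    and sndl: "snd (inp_lab k (a @ [b])) = str (tl b)"
    if "length a = k" for a b
    using inp_lab_snoc[OF that, of b] by (simp_all add: J_def X_def)
  obtain vs0 a0 sh0 where vs0: "vs0 \<in> set_pmf \<sigma>" and a0: "a0 \<in> set_pmf (seq_pmf (replicate k (S vs0)))"
    and sh0: "sh0 \<in> set_pmf (S vs0)" and x0eq: "inp_lab k (a0 @ [sh0]) = (inp, lab)"
    using x0 unfolding D_def[symmetric] Dalt by auto
  have la0: "length a0 = k" and a0S: "\<forall>x\<in>set a0. x \<in> set_pmf (S vs0)" using seq_rep_support[OF a0] by auto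
  have lab: "lab = str (tl sh0)" using sndl[OF la0, of sh0] x0eq by simp
  have z: "z = J a0 @ Dlm # X sh0" using pre[OF la0, of sh0] x0eq by (simp add: z_def)
  have tl0: "tl sh0 \<noteq> []" using t lab by auto
  obtain v1 q1 cs1 r0 where sh0e: "sh0 = (v1, q1, cs1) # r0" using tl0 by (cases sh0) auto
  have r0ne: "r0 \<noteq> []" using tl0 sh0e by simp
  have mfs0: "map fst sh0 = vs0" using set_gen[OF sh0[unfolded S_def]] by simp
  define vs0' where "vs0' = tl vs0"
  have vs0e: "vs0 = v1 # vs0'" using mfs0 sh0e by (auto simp: vs0'_def)
  have q1: "q1 \<in> set_pmf (vstep V c VALS None v1)" and cs1: "cs1 \<in> set_pmf (ctx_pmf CONT v1)"
    and r0G: "r0 \<in> set_pmf (gen V c VALS CONT (upd V None v1 q1) vs0')"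
  proof -
    have "sh0 \<in> set_pmf (gen V c VALS CONT None (v1 # vs0'))" using sh0 vs0e by (simp add: S_def)
    then obtain q cs r where "sh0 = (v1, q, cs) # r" "q \<in> set_pmf (vstep V c VALS None v1)"
      "cs \<in> set_pmf (ctx_pmf CONT v1)" "r \<in> set_pmf (gen V c VALS CONT (upd V None v1 q) vs0')"
      unfolding set_gen_Cons by blast
    then show "q1 \<in> set_pmf (vstep V c VALS None v1)" "cs1 \<in> set_pmf (ctx_pmf CONT v1)"
      "r0 \<in> set_pmf (gen V c VALS CONT (upd V None v1 q1) vs0')" using sh0e by auto
  qed
  define w where "w = take t (str r0)"
  define Q where "Q = progW V c VALS CONT (upd V None v1 q1) vs0' w"
  have kne: "a0 \<noteq> []" using la0 k by auto
  have Dfree: "\<forall>u\<in>set (map proc_shot a). Dlm \<notin> set u" for a by (auto simp: Dlm_proc_shot)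
  have DX: "Dlm \<notin> set (X b)" for b using Dlm_block[of "hd b"] Dlm_str[of "tl b"]
    by (auto simp: X_def dest: in_set_takeD)
  have Pp: "P_prog V c VALS CONT z = Q"
  proof -
    have "takeWhile (\<lambda>x. x \<noteq> Dlm) z = proc_shot (hd a0)"
      unfolding z J_def X_def using takeWhile_join[of "map proc_shot a0" Dlm] kne Dfree[of a0]
      by (simp add: hd_map)
    moreover have "hd a0 \<in> set_pmf (S vs0)" using a0S kne by simp
    ultimately have ps: "verts (drop 3 (takeWhile (\<lambda>x. x \<noteq> Dlm) z)) = v1 # vs0'"
      using set_gen[of "hd a0"] vs0e by (simp add: verts_proc_shot S_def)
    have "P_prog V c VALS CONT z = progW V c VALS CONT None (v1 # vs0') (block (v1, q1, cs1) @ Cm # w)"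
      by (rule P_prog_hdr[OF _ refl _ ps, where P="J a0" and L="fst (last sh0)"])
         (auto simp: z X_def sh0e w_def dest: in_set_takeD simp: Dlm_str)
    also have "\<dots> = Q" unfolding Q_def using progW_shift[of V c VALS CONT None v1 vs0' cs1 q1 w] by simp
    finally show ?thesis .
  qed
  have charE: "J a @ Dlm # X b = z \<longleftrightarrow> map proc_shot a = map proc_shot a0 \<and> X b = X sh0"
    if "length a = k" for a b
  proof -
    have ane: "a \<noteq> []" using that k by auto
    have "J a @ Dlm # X b = J a0 @ Dlm # X sh0 \<longleftrightarrow> map proc_shot a = map proc_shot a0 \<and> X b = X sh0"
      unfolding J_def by (rule join_sep_eq) (use ane la0 that Dfree in auto)
    then show ?thesis unfolding z by simp
  qed
  have vs_eq: "vs = vs0" if "\<forall>x\<in>set a. x \<in> set_pmf (S vs)" "length a = k" "map proc_shot a = map proc_shot a0" for vs a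
  proof -
    have ane: "a \<noteq> []" using that(2) k by auto
    have "proc_shot (hd a) = proc_shot (hd a0)" using that(3) ane kne by (metis hd_map)
    then have "map fst (hd a) = map fst (hd a0)" by (metis verts_proc_shot)
    moreover have "map fst (hd a) = vs"
    proof -
      have "hd a \<in> set_pmf (S vs)" using that(1) ane by simp
      then show ?thesis using set_gen unfolding S_def by blast
    qed
    moreover have "map fst (hd a0) = vs0"
    proof -
      have "hd a0 \<in> set_pmf (S vs0)" using a0S kne by simp
      then show ?thesis using set_gen unfolding S_def by blast
    qed
    ultimately show ?thesis by simp
  qed
  have vs0'ne: "vs0' \<noteq> []" using set_gen[OF r0G] r0ne by auto
  have Xchar: "X ((v1, q, cs) # r) = X sh0 \<longleftrightarrow> q = q1 \<and> cs = cs1 \<and> take t (str r) = take t (str r0)"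
    if "r \<in> set_pmf (gen V c VALS CONT p' vs0')" for q cs r p'
  proof -
    have rne: "r \<noteq> []" using set_gen[OF that] vs0'ne by auto
    have "fst (last r) = last vs0'" using set_gen[OF that] rne by (metis last_map)
    moreover have "fst (last r0) = last vs0'" using set_gen[OF r0G] r0ne by (metis last_map)
    ultimately have L: "fst (last ((v1, q, cs) # r)) = fst (last sh0)" using rne r0ne sh0e by simp
    have "X ((v1, q, cs) # r) = X sh0 \<longleftrightarrow> block (v1, q, cs) @ Cm # take t (str r) = block (v1, q1, cs1) @ Cm # take t (str r0)"
      unfolding X_def L using sh0e by simp
    also have "\<dots> \<longleftrightarrow> block (v1, q, cs) = block (v1, q1, cs1) \<and> take t (str r) = take t (str r0)"
      by (rule sep_eq) (auto simp: Cm_block)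
    also have "block (v1, q, cs) = block (v1, q1, cs1) \<longleftrightarrow> q = q1 \<and> cs = cs1"
      using ctx_app_eq[of cs v1 "[Eq, Val q]" cs1 v1 "[Eq, Val q1]"] by auto
    finally show ?thesis by simp
  qed
  have tr0: "t < length (str r0)" using t lab sh0e by simp
  note SC = shot_CP[OF VALS CONT disj r0G tr0]
  have Svs0: "S vs0 = bind_pmf (vstep V c VALS None v1) (\<lambda>q. bind_pmf (ctx_pmf CONT v1) (\<lambda>cs.
      map_pmf (Cons (v1, q, cs)) (gen V c VALS CONT (upd V None v1 q) vs0')))"
    by (simp add: S_def vs0e)
  have CPm: "CP D (\<lambda>(i, l). i @ take t l = z) (\<lambda>(i, l). l ! t) Q"
    unfolding Dalt
  proof (rule CP_bind, rule CP_bind)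
    fix vs a assume a: "a \<in> set_pmf (seq_pmf (replicate k (S vs)))"
    have la: "length a = k" and aS: "\<forall>x\<in>set a. x \<in> set_pmf (S vs)" using seq_rep_support[OF a] by auto
    have Eb: "(\<lambda>(i, l). i @ take t l = z) (inp_lab k (a @ [b])) \<longleftrightarrow> map proc_shot a = map proc_shot a0 \<and> X b = X sh0" for b
      using pre[OF la, of b] charE[OF la, of b] by (simp add: case_prod_beta)
    have gb: "(\<lambda>(i, l). l ! t) (inp_lab k (a @ [b])) = str (tl b) ! t" for b
      using nxt[OF la, of b] by (simp add: case_prod_beta)
    show "CP (map_pmf (\<lambda>b. inp_lab k (a @ [b])) (S vs)) (\<lambda>(i, l). i @ take t l = z) (\<lambda>(i, l). l ! t) Q"
    proof (cases "map proc_shot a = map proc_shot a0")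
      case False
      show ?thesis
      proof (rule CP_empty)
        fix \<omega> assume "\<omega> \<in> set_pmf (map_pmf (\<lambda>b. inp_lab k (a @ [b])) (S vs))"
        then obtain b where "\<omega> = inp_lab k (a @ [b])" by auto
        then show "\<not> (\<lambda>(i, l). i @ take t l = z) \<omega>" using Eb[of b] False by simp
      qed
    next
      case True
      then have vv: "vs = vs0" using vs_eq aS la by blast
      show ?thesis unfolding CP_map vv Svs0
      proof (rule CP_bind, rule CP_bind)
        fix q cs
        show "CP (map_pmf (Cons (v1, q, cs)) (gen V c VALS CONT (upd V None v1 q) vs0'))
            (\<lambda>x. (\<lambda>(i, l). i @ take t l = z) (inp_lab k (a @ [x]))) (\<lambda>x. (\<lambda>(i, l). l ! t) (inp_lab k (a @ [x]))) Q"
        proof (cases "q = q1 \<and> cs = cs1")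
          case True
          have "CP (gen V c VALS CONT (upd V None v1 q) vs0')
              (\<lambda>r. (\<lambda>(i, l). i @ take t l = z) (inp_lab k (a @ [(v1, q, cs) # r])))
              (\<lambda>r. (\<lambda>(i, l). l ! t) (inp_lab k (a @ [(v1, q, cs) # r]))) Q
            \<longleftrightarrow> CP (gen V c VALS CONT (upd V None v1 q) vs0') (\<lambda>r. take t (str r) = take t (str r0)) (\<lambda>r. str r ! t) Q"
          proof (rule CP_cong)
            fix r assume rG: "r \<in> set_pmf (gen V c VALS CONT (upd V None v1 q) vs0')"
            show "(\<lambda>(i, l). i @ take t l = z) (inp_lab k (a @ [(v1, q, cs) # r])) = (take t (str r) = take t (str r0))"
              using Eb Xchar[OF rG] \<open>map proc_shot a = map proc_shot a0\<close> True by simp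
            show "(\<lambda>(i, l). l ! t) (inp_lab k (a @ [(v1, q, cs) # r])) = str r ! t"
              using gb by simp
          qed
          then show ?thesis unfolding CP_map using SC True by (simp add: Q_def w_def)
        next
          case False
          show ?thesis
          proof (rule CP_empty)
            fix x assume "x \<in> set_pmf (map_pmf (Cons (v1, q, cs)) (gen V c VALS CONT (upd V None v1 q) vs0'))"
            then obtain r where x: "x = (v1, q, cs) # r" and rG: "r \<in> set_pmf (gen V c VALS CONT (upd V None v1 q) vs0')"
              by auto
            show "\<not> (\<lambda>(i, l). i @ take t l = z) (inp_lab k (a @ [x]))"
              using Eb Xchar[OF rG] False x by auto
          qed
        qed
      qed
    qed
  qed
  have E0: "(\<lambda>(i, l). i @ take t l = z) (inp, lab)" by (simp add: z_def)
  have Pt: "P_train D t z = Q"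
    unfolding P_train_def using CP_cond[OF CPm x0[folded D_def] E0] .
  have len: "t < length (snd x)" if xD: "x \<in> set_pmf D" and xE: "fst x @ take t (snd x) = z" for x
  proof -
    obtain vs a b where vs: "vs \<in> set_pmf \<sigma>" and a: "a \<in> set_pmf (seq_pmf (replicate k (S vs)))"
      and b: "b \<in> set_pmf (S vs)" and x: "x = inp_lab k (a @ [b])"
      using xD unfolding Dalt by auto
    have la: "length a = k" and aS: "\<forall>x\<in>set a. x \<in> set_pmf (S vs)" using seq_rep_support[OF a] by auto
    have E: "map proc_shot a = map proc_shot a0 \<and> X b = X sh0"
      using xE pre[OF la, of b] charE[OF la, of b] x by simp
    then have "vs = vs0" using vs_eq aS la by blast
    then have "b \<in> set_pmf (gen V c VALS CONT None (v1 # vs0'))" using b vs0e by (simp add: S_def)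
    then obtain q cs r where b': "b = (v1, q, cs) # r" and rG: "r \<in> set_pmf (gen V c VALS CONT (upd V None v1 q) vs0')"
      unfolding set_gen_Cons by blast
    have "q = q1 \<and> cs = cs1 \<and> take t (str r) = take t (str r0)" using E Xchar[OF rG] b' by simp
    then have "t < length (str r)" using SC rG by auto
    then show ?thesis using x sndl[OF la, of b] b' by simp
  qed
  have A: "P_prog V c VALS CONT (inp @ take t lab) = P_train (D_train V c VALS CONT \<sigma> k) t (inp @ take t lab)"
    using Pp Pt unfolding z_def D_def by simp
  have B: "\<forall>x \<in> set_pmf (D_train V c VALS CONT \<sigma> k). fst x @ take t (snd x) = inp @ take t lab \<longrightarrow> t < length (snd x)"
    using len unfolding z_def D_def by blast
  show ?thesis using A B by (rule conjI)
qed



lemma finite_set_bind_pmf: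
  "finite (set_pmf A) \<Longrightarrow> (\<And>a. a \<in> set_pmf A \<Longrightarrow> finite (set_pmf (f a))) \<Longrightarrow> finite (set_pmf (bind_pmf A f))"
  by simp

lemma finite_vstep:
  assumes "\<And>v. finite (VALS v) \<and> VALS v \<noteq> {}"
  shows "finite (set_pmf (vstep V c VALS prev v))"
  using assms by (auto simp: vstep_def split: option.splits)

lemma finite_ctx:
  assumes "finite (CONT v)" "CONT v \<noteq> {}"
  shows "finite (set_pmf (ctx_pmf CONT v))"
  using assms by (simp add: set_ctx_pmf finite_DL)

lemma finite_gen:
  assumes "\<And>v. finite (VALS v) \<and> VALS v \<noteq> {}" "\<And>v. finite (CONT v) \<and> CONT v \<noteq> {}"
  shows "finite (set_pmf (gen V c VALS CONT prev vs))"
proof (induction vs arbitrary: prev)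
  case Nil
  then show ?case by simp
next
  case (Cons v vs)
  have a: "finite (set_pmf (vstep V c VALS prev v))" by (rule finite_vstep) (rule assms(1))
  have b: "finite (set_pmf (ctx_pmf CONT v))" using finite_ctx[of CONT v] assms(2) by blast
  show ?case using a b Cons.IH by (auto intro!: finite_UN_I finite_imageI)
qed

lemma finite_seq_pmf: "(\<And>p. p \<in> set ps \<Longrightarrow> finite (set_pmf p)) \<Longrightarrow> finite (set_pmf (seq_pmf ps))"
  by (induction ps) auto

lemma finite_D_train:
  fixes V :: "'v::finite set"
  assumes VALS: "\<And>v. finite (VALS v) \<and> VALS v \<noteq> {}" and CONT: "\<And>v. finite (CONT v) \<and> CONT v \<noteq> {}"
    and \<sigma>: "set_pmf \<sigma> \<subseteq> {vs. train_vlist V E M M' vs}"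
  shows "finite (set_pmf (D_train V c VALS CONT \<sigma> k))"
proof -
  have "set_pmf \<sigma> \<subseteq> {vs. length vs = M + M'}"
    using \<sigma> by (auto simp: train_vlist_def dest!: length_shuffles)
  then have "finite (set_pmf \<sigma>)" by (rule finite_subset) (rule finite_list_length)
  moreover have "finite (set_pmf (gen V c VALS CONT None vs))" for vs by (rule finite_gen[OF VALS CONT])
  moreover have "finite (set_pmf (seq_pmf (replicate k (gen V c VALS CONT None vs))))" for vs
    by (rule finite_seq_pmf) (use finite_gen[OF VALS CONT] in auto)
  ultimately show ?thesis unfolding D_train_alt by (auto intro!: finite_UN_I finite_imageI)
qed

lemma nll_nonneg_real: "0 < p \<Longrightarrow> p \<le> 1 \<Longrightarrow> nll p = ennreal (- ln p)"
  by (simp add: nll_def)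

lemma gibbs:
  assumes fin: "finite (set_pmf p)"
  shows "(\<integral>\<^sup>+ y. nll (pmf p y) \<partial>measure_pmf p) \<le> (\<integral>\<^sup>+ y. nll (pmf q y) \<partial>measure_pmf p)"
proof (cases "\<exists>y\<in>set_pmf p. pmf q y = 0")
  case True
  then obtain y where y: "y \<in> set_pmf p" "pmf q y = 0" by blast
  have "(\<integral>\<^sup>+ y. nll (pmf q y) \<partial>measure_pmf p) = (\<Sum>x\<in>set_pmf p. nll (pmf q x) * pmf p x)"
    by (rule nn_integral_measure_pmf_finite[OF fin]) simp
  also have "\<dots> \<ge> nll (pmf q y) * pmf p y"
    by (rule member_le_sum) (use y fin in auto)
  moreover have "nll (pmf q y) * pmf p y = \<infinity>" using y by (simp add: nll_def set_pmf_iff ennreal_mult_top)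
  ultimately show ?thesis by (simp add: top_unique)
next
  case False
  then have qpos: "\<And>y. y \<in> set_pmf p \<Longrightarrow> 0 < pmf q y" using pmf_nonneg le_less by metis
  have ppos: "\<And>y. y \<in> set_pmf p \<Longrightarrow> 0 < pmf p y" by (simp add: pmf_positive)
  have lnp: "ln (pmf p y) * pmf p y \<le> 0" "ln (pmf q y) * pmf p y \<le> 0" if "y \<in> set_pmf p" for y
    using ppos[OF that] qpos[OF that] pmf_le_1[of p y] pmf_le_1[of q y]
    by (auto intro!: mult_nonpos_nonneg)
  have L: "(\<integral>\<^sup>+ y. nll (pmf p y) \<partial>measure_pmf p) = ennreal (\<Sum>x\<in>set_pmf p. - ln (pmf p x) * pmf p x)"
  proof -
    have "(\<integral>\<^sup>+ y. nll (pmf p y) \<partial>measure_pmf p) = (\<Sum>x\<in>set_pmf p. nll (pmf p x) * pmf p x)"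
      by (rule nn_integral_measure_pmf_finite[OF fin]) simp
    also have "\<dots> = (\<Sum>x\<in>set_pmf p. ennreal (- ln (pmf p x) * pmf p x))"
    proof (rule sum.cong)
      fix x assume x: "x \<in> set_pmf p"
      have "0 \<le> - ln (pmf p x)" using ppos[OF x] pmf_le_1[of p x] by simp
      then show "nll (pmf p x) * ennreal (pmf p x) = ennreal (- ln (pmf p x) * pmf p x)"
        using ppos[OF x] ppos[OF x] ennreal_mult[of "- ln (pmf p x)" "pmf p x"] by (simp add: nll_def)
    qed simp
    also have "\<dots> = ennreal (\<Sum>x\<in>set_pmf p. - ln (pmf p x) * pmf p x)"
      by (rule sum_ennreal) (use lnp in auto)
    finally show ?thesis .
  qed
  have R: "(\<integral>\<^sup>+ y. nll (pmf q y) \<partial>measure_pmf p) = ennreal (\<Sum>x\<in>set_pmf p. - ln (pmf q x) * pmf p x)"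
  proof -
    have "(\<integral>\<^sup>+ y. nll (pmf q y) \<partial>measure_pmf p) = (\<Sum>x\<in>set_pmf p. nll (pmf q x) * pmf p x)"
      by (rule nn_integral_measure_pmf_finite[OF fin]) simp
    also have "\<dots> = (\<Sum>x\<in>set_pmf p. ennreal (- ln (pmf q x) * pmf p x))"
    proof (rule sum.cong)
      fix x assume x: "x \<in> set_pmf p"
      have "0 \<le> - ln (pmf q x)" using qpos[OF x] pmf_le_1[of q x] by simp
      then show "nll (pmf q x) * ennreal (pmf p x) = ennreal (- ln (pmf q x) * pmf p x)"
        using qpos[OF x] ppos[OF x] ennreal_mult[of "- ln (pmf q x)" "pmf p x"] by (simp add: nll_def)
    qed simp
    also have "\<dots> = ennreal (\<Sum>x\<in>set_pmf p. - ln (pmf q x) * pmf p x)"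
      by (rule sum_ennreal) (use lnp in auto)
    finally show ?thesis .
  qed
  have key: "(\<Sum>x\<in>set_pmf p. - ln (pmf p x) * pmf p x) \<le> (\<Sum>x\<in>set_pmf p. - ln (pmf q x) * pmf p x)"
  proof -
    have each: "- ln (pmf p x) * pmf p x - (- ln (pmf q x) * pmf p x) \<le> pmf q x - pmf p x" if "x \<in> set_pmf p" for x
    proof -
      have "ln (pmf q x / pmf p x) \<le> pmf q x / pmf p x - 1"
        by (rule ln_le_minus_one) (simp add: qpos ppos that)
      then have "pmf p x * ln (pmf q x / pmf p x) \<le> pmf p x * (pmf q x / pmf p x - 1)"
        using ppos[OF that] by (simp add: mult_left_mono)
      also have "pmf p x * (pmf q x / pmf p x - 1) = pmf q x - pmf p x"
        using ppos[OF that] by (simp add: field_simps)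
      also have "ln (pmf q x / pmf p x) = ln (pmf q x) - ln (pmf p x)"
        using qpos[OF that] ppos[OF that] by (simp add: ln_div)
      finally have "pmf p x * (ln (pmf q x) - ln (pmf p x)) \<le> pmf q x - pmf p x" .
      then show ?thesis by (simp add: algebra_simps)
    qed
    have "(\<Sum>x\<in>set_pmf p. - ln (pmf p x) * pmf p x - (- ln (pmf q x) * pmf p x)) \<le> (\<Sum>x\<in>set_pmf p. pmf q x - pmf p x)"
      by (rule sum_mono) (rule each)
    moreover have "(\<Sum>x\<in>set_pmf p. pmf q x - pmf p x) \<le> 0"
    proof -
      have "measure_pmf.prob p (set_pmf p) = measure_pmf.prob p UNIV"
        using measure_Int_set_pmf[of p UNIV] by simp
      then have "(\<Sum>x\<in>set_pmf p. pmf p x) = 1"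
        using measure_measure_pmf_finite[OF fin, of p] by simp
      moreover have "(\<Sum>x\<in>set_pmf p. pmf q x) \<le> 1"
        using measure_measure_pmf_finite[OF fin, of q] measure_pmf.prob_le_1[of q "set_pmf p"] by simp
      ultimately show ?thesis by (simp add: sum_subtractf)
    qed
    ultimately have "(\<Sum>x\<in>set_pmf p. - ln (pmf p x) * pmf p x - (- ln (pmf q x) * pmf p x)) \<le> 0" by linarith
    then show ?thesis unfolding sum_subtractf by linarith
  qed
  show ?thesis unfolding L R using key by (simp add: ennreal_leI)
qed



lemma P_train_alt:
  "P_train D t z = map_pmf (\<lambda>x. snd x ! t) (cond_pmf D {x. fst x @ take t (snd x) = z})"
  unfolding P_train_def case_prod_unfold ..

lemma per_t:
  fixes V :: "'v set" and CONT :: "'v \<Rightarrow> 'c set" and c :: "'v \<times> 'v \<Rightarrow> int"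
    and P :: "('v, 'c) tok list \<Rightarrow> ('v, 'c) tok pmf"
  assumes VALS: "\<And>v. finite (VALS v) \<and> VALS v \<noteq> {}"
    and CONT: "\<And>v. finite (CONT v) \<and> CONT v \<noteq> {}"
    and disj: "\<And>v w. v \<noteq> w \<Longrightarrow> CONT v \<inter> CONT w = {}"
    and k: "1 \<le> k"
    and fin: "finite (set_pmf (D_train V c VALS CONT \<sigma> k))"
  shows "(\<integral>\<^sup>+ x. (if t \<in> {1..<length (snd x)} then nll (pmf (P_prog V c VALS CONT (fst x @ take t (snd x))) (snd x ! t)) else 0)
            \<partial>measure_pmf (D_train V c VALS CONT \<sigma> k))
       \<le> (\<integral>\<^sup>+ x. (if t \<in> {1..<length (snd x)} then nll (pmf (P (fst x @ take t (snd x))) (snd x ! t)) else 0)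
            \<partial>measure_pmf (D_train V c VALS CONT \<sigma> k))"
proof -
  define D where "D = D_train V c VALS CONT \<sigma> k"
  define pre where "pre x = fst x @ take t (snd x)" for x :: "('v, 'c) tok list \<times> ('v, 'c) tok list"
  define F where "F R x = (if t \<in> {1..<length (snd x)} then nll (pmf (R (pre x)) (snd x ! t)) else 0)"
    for R :: "('v, 'c) tok list \<Rightarrow> ('v, 'c) tok pmf" and x
  define C where "C z = cond_pmf D {x. pre x = z}" for z
  have dec: "bind_pmf (map_pmf pre D) C = D"
    unfolding C_def by (rule bind_cond_pmf_cancel) (auto simp: measure_map_pmf vimage_def)
  have int: "(\<integral>\<^sup>+ x. F R x \<partial>measure_pmf D) = (\<integral>\<^sup>+ z. (\<integral>\<^sup>+ x. F R x \<partial>measure_pmf (C z)) \<partial>measure_pmf (map_pmf pre D))" for R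
    by (subst dec[symmetric]) simp
  have inner: "(\<integral>\<^sup>+ x. F (P_prog V c VALS CONT) x \<partial>measure_pmf (C z)) \<le> (\<integral>\<^sup>+ x. F P x \<partial>measure_pmf (C z))"
    if z: "z \<in> set_pmf (map_pmf pre D)" for z
  proof -
    have ne: "set_pmf D \<inter> {x. pre x = z} \<noteq> {}" using z by auto
    have setC: "set_pmf (C z) = set_pmf D \<inter> {x. pre x = z}" unfolding C_def using ne by simp
    show ?thesis
    proof (cases "\<exists>x1 \<in> set_pmf D. pre x1 = z \<and> t \<in> {1..<length (snd x1)}")
      case True
      then obtain x1 where x1: "x1 \<in> set_pmf D" "pre x1 = z" "1 \<le> t" "t < length (snd x1)" by auto
      have x1': "(fst x1, snd x1) \<in> set_pmf (D_train V c VALS CONT \<sigma> k)" using x1 by (simp add: D_def)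
      note p1 = part1[OF VALS CONT disj k x1' x1(4)]
      have Pz: "P_prog V c VALS CONT z = P_train D t z" using p1 x1(2) by (simp add: pre_def D_def)
      have allt: "t < length (snd x)" if "x \<in> set_pmf D" "pre x = z" for x
        using p1 that x1(2) by (auto simp: pre_def D_def)
      have Fon: "F R x = nll (pmf (R z) (snd x ! t))" if "x \<in> set_pmf (C z)" for R x
        using that setC allt x1(3) by (auto simp: F_def)
      have eqR: "(\<integral>\<^sup>+ x. F R x \<partial>measure_pmf (C z)) = (\<integral>\<^sup>+ y. nll (pmf (R z) y) \<partial>measure_pmf (P_train D t z))" for R
      proof -
        have "(\<integral>\<^sup>+ x. F R x \<partial>measure_pmf (C z)) = (\<integral>\<^sup>+ x. nll (pmf (R z) (snd x ! t)) \<partial>measure_pmf (C z))"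
          by (rule nn_integral_cong_AE) (auto simp: AE_measure_pmf_iff Fon)
        also have "\<dots> = (\<integral>\<^sup>+ y. nll (pmf (R z) y) \<partial>measure_pmf (P_train D t z))"
          unfolding P_train_alt C_def pre_def by simp
        finally show ?thesis .
      qed
      have finQ: "finite (set_pmf (P_train D t z))"
      proof -
        have "set_pmf (P_train D t z) \<subseteq> (\<lambda>x. snd x ! t) ` set_pmf D"
          unfolding P_train_alt using ne by (auto simp: pre_def)
        then show ?thesis using fin by (auto simp: D_def intro: finite_subset)
      qed
      show ?thesis unfolding eqR Pz using gibbs[OF finQ] by simp
    next
      case False
      have "F R x = 0" if "x \<in> set_pmf (C z)" for R x
        using that setC False by (auto simp: F_def)
      then have "(\<integral>\<^sup>+ x. F R x \<partial>measure_pmf (C z)) = 0" for R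
        by (subst nn_integral_cong_AE[where v="\<lambda>_. 0"]) (auto simp: AE_measure_pmf_iff)
      then show ?thesis by simp
    qed
  qed
  have "(\<integral>\<^sup>+ x. F (P_prog V c VALS CONT) x \<partial>measure_pmf D) \<le> (\<integral>\<^sup>+ x. F P x \<partial>measure_pmf D)"
    unfolding int by (rule nn_integral_mono_AE) (auto simp: AE_measure_pmf_iff inner)
  then show ?thesis unfolding F_def pre_def D_def by simp
qed



lemma sum_as_suminf:
  fixes g :: "nat \<Rightarrow> ennreal"
  shows "(\<Sum>t\<in>{1..<n}. g t) = (\<Sum>t. if t \<in> {1..<n} then g t else 0)"
proof -
  have "(\<Sum>t. if t \<in> {1..<n} then g t else 0) = (\<Sum>t\<in>{1..<n}. if t \<in> {1..<n} then g t else 0)"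
    by (rule suminf_finite) auto
  then show ?thesis by simp
qed

theorem lemma1:
  fixes V :: "'v::finite set" and E :: "('v \<times> 'v) set" and c :: "'v \<times> 'v \<Rightarrow> int"
    and VALS :: "'v \<Rightarrow> int set" and CONT :: "'v \<Rightarrow> 'c set"
    and M M' K k t :: nat and \<sigma> :: "'v list pmf"
    and inp lab :: "('v, 'c) tok list"
  assumes E_sub: "E \<subseteq> V \<times> V"
    and VALS: "\<And>v. finite (VALS v) \<and> VALS v \<noteq> {}"
    and CONT: "\<And>v. finite (CONT v) \<and> CONT v \<noteq> {}"
    and CONT_disj: "\<And>v w. v \<noteq> w \<Longrightarrow> CONT v \<inter> CONT w = {}"
    and op_maps: "\<And>a b q. (a, b) \<in> E \<Longrightarrow> q \<in> VALS a \<Longrightarrow> q + c (a, b) \<in> VALS b"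
    and M_lt_N: "enat M < depth V E"
    and \<sigma>: "set_pmf \<sigma> \<subseteq> {vs. train_vlist V E M M' vs}"
    and k: "1 \<le> k"
    and supp: "(inp, lab) \<in> set_pmf (D_train V c VALS CONT \<sigma> k)"
    and t: "t < length lab"
  shows "P_prog V c VALS CONT (inp @ take t lab)
           = P_train (D_train V c VALS CONT \<sigma> k) t (inp @ take t lab)
         \<and> (\<forall>P. train_loss (D_train V c VALS CONT \<sigma>) K (P_prog V c VALS CONT)
                 \<le> train_loss (D_train V c VALS CONT \<sigma>) K P)"
proof
  show "P_prog V c VALS CONT (inp @ take t lab) = P_train (D_train V c VALS CONT \<sigma> k) t (inp @ take t lab)"
    using part1[OF VALS CONT CONT_disj k supp t] by blast
next
  show "\<forall>P. train_loss (D_train V c VALS CONT \<sigma>) K (P_prog V c VALS CONT) \<le> train_loss (D_train V c VALS CONT \<sigma>) K P"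
  proof
    fix P :: "('v, 'c) tok list \<Rightarrow> ('v, 'c) tok pmf"
    show "train_loss (D_train V c VALS CONT \<sigma>) K (P_prog V c VALS CONT) \<le> train_loss (D_train V c VALS CONT \<sigma>) K P"
      unfolding train_loss_def
    proof (rule sum_mono)
      fix kk assume kk: "kk \<in> {1..<K}"
      define D where "D = D_train V c VALS CONT \<sigma> kk"
      define G where "G R t x = (if t \<in> {1..<length (snd x)} then nll (pmf (R (fst x @ take t (snd x))) (snd x ! t)) else 0)"
        for R :: "('v, 'c) tok list \<Rightarrow> ('v, 'c) tok pmf" and t and x :: "('v, 'c) tok list \<times> ('v, 'c) tok list"
      have fin: "finite (set_pmf D)" unfolding D_def by (rule finite_D_train[OF VALS CONT \<sigma>])
      have eq: "(\<integral>\<^sup>+ x. (\<Sum>t\<in>{1..<length (snd x)}. nll (pmf (R (fst x @ take t (snd x))) (snd x ! t))) \<partial>measure_pmf D)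
             = (\<Sum>t. \<integral>\<^sup>+ x. G R t x \<partial>measure_pmf D)" for R
      proof -
        have "(\<integral>\<^sup>+ x. (\<Sum>t\<in>{1..<length (snd x)}. nll (pmf (R (fst x @ take t (snd x))) (snd x ! t))) \<partial>measure_pmf D)
             = (\<integral>\<^sup>+ x. (\<Sum>t. G R t x) \<partial>measure_pmf D)"
          unfolding G_def sum_as_suminf ..
        also have "\<dots> = (\<Sum>t. \<integral>\<^sup>+ x. G R t x \<partial>measure_pmf D)"
          by (rule nn_integral_suminf) simp
        finally show ?thesis .
      qed
      have le: "(\<integral>\<^sup>+ x. G (P_prog V c VALS CONT) t x \<partial>measure_pmf D) \<le> (\<integral>\<^sup>+ x. G P t x \<partial>measure_pmf D)" for t
        unfolding G_def D_def
        by (rule per_t[OF VALS CONT CONT_disj _ fin[unfolded D_def]]) (use kk in auto)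
      show "(\<integral>\<^sup>+ x. (\<Sum>t\<in>{1..<length (snd x)}. nll (pmf (P_prog V c VALS CONT (fst x @ take t (snd x))) (snd x ! t))) \<partial>measure_pmf (D_train V c VALS CONT \<sigma> kk))
          \<le> (\<integral>\<^sup>+ x. (\<Sum>t\<in>{1..<length (snd x)}. nll (pmf (P (fst x @ take t (snd x))) (snd x ! t))) \<partial>measure_pmf (D_train V c VALS CONT \<sigma> kk))"
        unfolding D_def[symmetric] eq
        by (rule suminf_le) (use le in \<open>auto intro: summableI\<close>)
    qed
  qed
qed


end
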